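(* Assume (A1)–(A4) below. Then the following hold. - If $a>0$, then $\mathcal C_{\rm num}=\{0\}$, and the unique boundary layer profile associated with $0$ is the zero sequence. - If $a<0$, then $\mathcal C_{\rm num}=\mathbb{R}$. For every $u\in\mathbb{R}$ there is a unique boundary layer profile $(v_j)_{j\in\mathbb{N}}$ associated with $u$, and it decays exponentially fast as $j\to\infty$. Moreover, $v_j=u\,w_j$ for all $j\ge0$, where $(w_j)$ is the boundary layer profile associated with $u=1$.
   Context: Fix the following data: - a real number $a\neq0$; - nonnegative integers $p,r$ and real coefficients $a_{-r},\dots,a_p$ with $a_{-r}\neq0$ and $a_p\neq0$; - an integer $k\ge1$ and real coefficients $\alpha_0,\dots,\alpha_k$, $\beta_0,\dots,\beta_{k-1}$ with $\alpha_k=1$ and $|\alpha_0|+|\beta_0|>0$; - a fixed ratio $\lambda>0$. For $\Delta t\in(0,1]$ set $\Delta x=\Delta t/\lambda$. Let $\mathcal A(z)=\sum_{\ell=-r}^p a_\ell z^\ell$ for $z\in\mathbb{C}\setminus\{0\}$. Assumptions: (A1) $\sum_{\ell=-r}^p a_\ell=0$ and $\sum_{\ell=-r}^p\ell a_\ell=a$. (A2) $\sum_{\sigma=0}^k\alpha_\sigma=0$ and $\sum_{\sigma=0}^k\sigma\alpha_\sigma=\sum_{\sigma=0}^{k-1}\beta_\sigma$. (A3) There is $C>0$ such that for all $\Delta t\in(0,1]$, every solution $(u_j^n)_{j\in\mathbb{Z},n\in\mathbb{N}}$ of $\sum_{\sigma=0}^k\alpha_\sigma u_j^{n+\sigma}+\lambda\sum_{\sigma=0}^{k-1}\beta_\sigma\sum_{\ell=-r}^pa_\ell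 u_{j+\ell}^{n+\sigma}=0$ ($j\in\mathbb{Z}$, $n\in\mathbb{N}$) satisfies $\sup_{n}\sum_{j\in\mathbb{Z}}\Delta x|u_j^n|^2\le C\sum_{\sigma=0}^{k-1}\sum_{j\in\mathbb{Z}}\Delta x|u_j^\sigma|^2$. (A4) $\mathcal A(e^{i\theta})\neq0$ for all $\theta\in[-\pi,\pi]\setminus\{0\}$. Numerical flux: define $f_\ell=-\sum_{i=-r}^{\ell}a_i$ for $\ell=-r,\dots,p-1$, and $F(v_0,\dots,v_{p+r-1})=\sum_{\ell=-r}^{p-1}f_\ell v_{\ell+r}$. Then $\sum_{\ell=-r}^pa_\ell u_{j+\ell}=F(u_{j-r+1},\dots,u_{j+p})-F(u_{j-r},\dots,u_{j+p-1})$. Boundary layer profile: given $u\in\mathbb{R}$, a boundary layer profile associated with $u$ is a real sequence $(v_j)_{j\in\mathbb{N}}$ such that (i) $v_0=\dots=v_{r-1}=-u$; (ii) $F(u+v_j,\dots,u+v_{j+p+r-1})=F(u,\dots,u)$ for all $j\ge0$; (iii) $v_j\to0$ as $j\to\infty$. $\mathcal C_{\rm num}$ denotes the set of all $u\in\mathbb{R}$ for which a boundary layer profile associated with $u$ exists. *)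

theory Defs
  imports "HOL-Analysis.Analysis"
begin

text \<open>Coefficients a_l of the scheme are given as a function A :: int => real;
only the values for l in {-r..p} matter.\<close>

definition flux_coeff :: "(int \<Rightarrow> real) \<Rightarrow> nat \<Rightarrow> int \<Rightarrow> real" where
  "flux_coeff A r l = - (\<Sum>i\<in>{- int r..l}. A i)"

definition num_flux :: "(int \<Rightarrow> real) \<Rightarrow> nat \<Rightarrow> nat \<Rightarrow> (nat \<Rightarrow> real) \<Rightarrow> real" where
  "num_flux A r p w = (\<Sum>l\<in>{- int r..int p - 1}. flux_coeff A r l * w (nat (l + int r)))"

definition boundary_layer_profile ::
  "(int \<Rightarrow> real) \<Rightarrow> nat \<Rightarrow> nat \<Rightarrow> real \<Rightarrow> (nat \<Rightarrow> real) \<Rightarrow> bool" where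
  "boundary_layer_profile A r p u v \<longleftrightarrow>
     (\<forall>j<r. v j = - u) \<and>
     (\<forall>j. num_flux A r p (\<lambda>i. u + v (j + i)) = num_flux A r p (\<lambda>_. u)) \<and>
     v \<longlonglongrightarrow> 0"

definition C_num :: "(int \<Rightarrow> real) \<Rightarrow> nat \<Rightarrow> nat \<Rightarrow> real set" where
  "C_num A r p = {u. \<exists>v. boundary_layer_profile A r p u v}"

definition symbol :: "(int \<Rightarrow> real) \<Rightarrow> nat \<Rightarrow> nat \<Rightarrow> complex \<Rightarrow> complex" where
  "symbol A r p z = (\<Sum>l\<in>{- int r..int p}. complex_of_real (A l) * z powi l)"

definition scheme_solution ::
  "(int \<Rightarrow> real) \<Rightarrow> nat \<Rightarrow> nat \<Rightarrow> nat \<Rightarrow> (nat \<Rightarrow> real) \<Rightarrow> (nat \<Rightarrow> real) \<Rightarrow> real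
    \<Rightarrow> (int \<Rightarrow> nat \<Rightarrow> real) \<Rightarrow> bool" where
  "scheme_solution A r p k \<alpha> \<beta> lam u \<longleftrightarrow>
     (\<forall>j n. (\<Sum>\<sigma>\<le>k. \<alpha> \<sigma> * u j (n + \<sigma>))
        + lam * (\<Sum>\<sigma><k. \<beta> \<sigma> * (\<Sum>l\<in>{- int r..int p}. A l * u (j + l) (n + \<sigma>))) = 0)"

text \<open>(A3), with sums over Z of nonnegative terms; when the right-hand side is
finite (initial data square summable) the left-hand side is finite and bounded.\<close>
definition stable_scheme ::
  "(int \<Rightarrow> real) \<Rightarrow> nat \<Rightarrow> nat \<Rightarrow> nat \<Rightarrow> (nat \<Rightarrow> real) \<Rightarrow> (nat \<Rightarrow> real) \<Rightarrow> real \<Rightarrow> bool" where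
  "stable_scheme A r p k \<alpha> \<beta> lam \<longleftrightarrow>
     (\<exists>C>0. \<forall>dt. 0 < dt \<and> dt \<le> 1 \<longrightarrow>
        (\<forall>u. scheme_solution A r p k \<alpha> \<beta> lam u \<longrightarrow>
           (\<forall>\<sigma><k. (\<lambda>j. (dt / lam) * (u j \<sigma>)\<^sup>2) summable_on UNIV) \<longrightarrow>
           (\<forall>n. (\<lambda>j. (dt / lam) * (u j n)\<^sup>2) summable_on UNIV \<and>
                (\<Sum>\<^sub>\<infinity>j. (dt / lam) * (u j n)\<^sup>2)
                  \<le> C * (\<Sum>\<sigma><k. \<Sum>\<^sub>\<infinity>j. (dt / lam) * (u j \<sigma>)\<^sup>2))))"

end

theory Submission
  imports Defs "HOL-Complex_Analysis.Complex_Analysis" "HOL-Computational_Algebra.Fundamental_Theorem_Algebra"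
begin


definition ap :: "'a::comm_ring_1 poly \<Rightarrow> (nat \<Rightarrow> 'a) \<Rightarrow> nat \<Rightarrow> 'a" where
  "ap H v j = (\<Sum>i\<le>degree H. coeff H i * v (j+i))"

lemma ap_sum: "degree H < n \<Longrightarrow> ap H v j = (\<Sum>i<n. coeff H i * v (j+i))"
  unfolding ap_def
  by (rule sum.mono_neutral_left) (auto simp: coeff_eq_0)

lemma ap_add: "ap (G + H) v j = ap G v j + ap H v j"
proof -
  define n where "n = Suc (max (degree G) (degree H))"
  have "degree (G+H) < n" "degree G < n" "degree H < n" unfolding n_def
    using degree_add_le_max[of G H] by auto
  then show ?thesis
    by (simp only: ap_sum[of "G+H" n] ap_sum[of G n] ap_sum[of H n] sum.distrib[symmetric]
        coeff_add distrib_right)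
qed

lemma ap_smult: "ap (smult c H) v j = c * ap H v j"
proof -
  have "degree (smult c H) < Suc (degree H)" "degree H < Suc (degree H)"
    using degree_smult_le[of c H] by auto
  then show ?thesis
    by (simp only: ap_sum[of "smult c H" "Suc (degree H)"] ap_sum[of H "Suc (degree H)"]
       sum_distrib_left coeff_smult mult.assoc)
qed

lemma ap_pCons0: "ap (pCons 0 H) v j = ap H v (Suc j)"
proof -
  have "degree (pCons 0 H) < Suc (Suc (degree H))" "degree H < Suc (degree H)"
    by (auto simp: degree_pCons_le le_less_trans)
  then show ?thesis
    by (simp only: ap_sum[of "pCons 0 H" "Suc (Suc (degree H))"] ap_sum[of H "Suc (degree H)"]
      sum.lessThan_Suc_shift) simp
qed

lemma ap_0[simp]: "ap 0 v j = 0" by (simp add: ap_def)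

lemma ap_const: "ap [:c:] v j = c * v j"
  by (simp add: ap_def)

lemma ap_pCons: "ap (pCons c H) v j = c * v j + ap H v (Suc j)"
proof -
  have "pCons c H = [:c:] + pCons 0 H" by simp
  then show ?thesis by (simp only: ap_add ap_const ap_pCons0)
qed

lemma ap_mult: "ap (G * H) v j = ap G (ap H v) j"
proof (induction G arbitrary: j)
  case 0
  then show ?case by (simp add: ap_def)
next
  case (pCons c G)
  have "pCons c G * H = smult c H + pCons 0 (G * H)" by simp
  then have "ap (pCons c G * H) v j = c * ap H v j + ap (G*H) v (Suc j)"
    by (simp only: ap_add ap_smult ap_pCons0)
  also have "\<dots> = ap (pCons c G) (ap H v) j" using pCons by (simp add: ap_pCons)
  finally show ?case .
qed

lemma ap_lin: "ap [:-z,1:] v j = v (Suc j) - z * v j"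
  by (simp add: ap_pCons ap_const)

lemma ap_tendsto:
  fixes v :: "nat \<Rightarrow> 'a::{comm_ring_1,real_normed_algebra}"
  assumes "v \<longlonglongrightarrow> 0" shows "ap H v \<longlonglongrightarrow> 0"
proof -
  have "(\<lambda>j. \<Sum>i\<le>degree H. coeff H i * v (j+i)) \<longlonglongrightarrow> (\<Sum>i\<le>degree H. coeff H i * 0)"
    apply (intro tendsto_sum tendsto_mult tendsto_const)
    using LIMSEQ_ignore_initial_segment[OF assms] by (simp add: add.commute)
  then show ?thesis unfolding ap_def[abs_def] by simp
qed

lemma poly_root_factor:
  fixes P :: "complex poly"
  assumes "degree P > 0"
  obtains z P' where "P = [:-z,1:] * P'" "poly P z = 0" "degree P' = degree P - 1"
proof -
  have "\<not> constant (poly P)" using assms constant_degree[of P] by simp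
  then obtain z where z: "poly P z = 0"
    using fundamental_theorem_of_algebra by blast
  then obtain P' where P': "P = [:-z,1:] * P'" using poly_eq_0_iff_dvd by (metis dvdE)
  then have "P' \<noteq> 0" using assms by auto
  have "degree ([:-z,1:]*P') = degree [:-z,1:] + degree P'"
    using \<open>P' \<noteq> 0\<close> by (intro degree_mult_eq) auto
  then have "degree P' = degree P - 1" using P' by simp
  then show ?thesis using that P' z by blast
qed

lemma deg0_const:
  assumes "degree (R::'a::zero poly) = 0" "R \<noteq> 0"
  shows "R = [:coeff R 0:] \<and> coeff R 0 \<noteq> 0"
  using assms by (metis degree_eq_zeroE pCons_eq_0_iff coeff_pCons_0)

lemma R1_aux:
  fixes R :: "complex poly"
  assumes "R \<noteq> 0" "\<forall>z. poly R z = 0 \<longrightarrow> cmod z > 1" "\<forall>j. ap R w j = 0" "w \<longlonglongrightarrow> 0"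
  shows "\<forall>j. w j = 0"
  using assms
proof (induction "degree R" arbitrary: R)
  case 0
  then have c: "R = [:coeff R 0:]" "coeff R 0 \<noteq> 0" using deg0_const by metis+
  show ?case
  proof
    fix j
    have "ap R w j = coeff R 0 * w j" using c(1) ap_const by metis
    then show "w j = 0" using 0 c(2) by simp
  qed
next
  case (Suc n)
  then have "degree R > 0" by simp
  then obtain z R' where zR: "R = [:-z,1:] * R'" "poly R z = 0" "degree R' = degree R - 1"
    using poly_root_factor by blast
  have z1: "cmod z > 1" using Suc(4) zR(2) by blast
  define y where "y = ap R' w"
  have ys: "y (Suc j) = z * y j" for j
  proof -
    have "ap R w j = y (Suc j) - z * y j" unfolding zR(1) ap_mult y_def by (rule ap_lin)
    then show ?thesis using Suc(5) by simp
  qed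
  have ypow: "y j = z^j * y 0" for j by (induction j) (auto simp: ys)
  have yt: "y \<longlonglongrightarrow> 0" unfolding y_def using ap_tendsto Suc(6) by blast
  have yle: "cmod (y 0) \<le> cmod (y j)" for j
  proof -
    have "1 \<le> cmod z ^ j" using z1 by (simp add: one_le_power)
    then have "1 * cmod (y 0) \<le> cmod z ^ j * cmod (y 0)" by (intro mult_right_mono) auto
    then show ?thesis by (subst (2) ypow) (simp add: norm_mult norm_power)
  qed
  have "cmod (y 0) \<le> norm (0::complex)"
    by (rule LIMSEQ_le_const[OF tendsto_norm[OF yt]]) (use yle in blast)
  then have "y 0 = 0" by simp
  then have y0: "\<forall>j. ap R' w j = 0" using ypow unfolding y_def by (metis mult_zero_right)
  have R'0: "R' \<noteq> 0" using Suc(3) zR(1) by auto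
  have "\<forall>z. poly R' z = 0 \<longrightarrow> cmod z > 1" using Suc(4) zR(1) by simp
  moreover have "n = degree R'" using Suc(2) zR(3) by simp
  ultimately show ?case using Suc(1)[OF _ R'0 _ y0 Suc(6)] by blast
qed

definition expd :: "(nat \<Rightarrow> complex) \<Rightarrow> bool" where
  "expd v \<longleftrightarrow> (\<exists>K \<nu>. 0 < \<nu> \<and> \<nu> < 1 \<and> (\<forall>j. cmod (v j) \<le> K * \<nu>^j))"

lemma expd_step:
  assumes "cmod z < 1" "expd y" "\<forall>j. v (Suc j) = z * v j + y j"
  shows "expd v"
proof -
  obtain K \<mu> where K: "0 < \<mu>" "\<mu> < 1" "\<forall>j. cmod (y j) \<le> K * \<mu>^j" using assms(2) expd_def by auto
  define \<nu> where "\<nu> = (max (cmod z) \<mu> + 1) / 2"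
  have nu: "0 < \<nu>" "\<nu> < 1" "cmod z < \<nu>" "\<mu> \<le> \<nu>" using K assms(1) unfolding \<nu>_def by auto
  define L where "L = max (cmod (v 0)) (K / (\<nu> - cmod z))"
  have "cmod (y 0) \<le> K" using K(3) by (metis power_0 mult_1_right)
  then have K0: "K \<ge> 0" using norm_ge_zero[of "y 0"] by linarith
  have "K / (\<nu> - cmod z) \<le> L" unfolding L_def by simp
  then have KL: "K \<le> (\<nu> - cmod z) * L" using nu by (simp add: pos_divide_le_eq mult.commute)
  have "cmod (v j) \<le> L * \<nu>^j" for j
  proof (induction j)
    case 0 then show ?case by (simp add: L_def)
  next
    case (Suc j)
    have A: "cmod z * cmod (v j) \<le> cmod z * (L * \<nu> ^ j)" using Suc by (simp add: mult_left_mono)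
    have "\<mu>^j \<le> \<nu>^j" using K(1) nu by (intro power_mono) auto
    then have B: "cmod (y j) \<le> K * \<nu> ^ j" using K(3) K0 by (meson mult_left_mono order_trans)
    have C: "K * \<nu>^j \<le> (\<nu> - cmod z) * L * \<nu>^j" using nu KL by (simp add: mult_right_mono)
    have "cmod (v (Suc j)) \<le> cmod z * cmod (v j) + cmod (y j)"
      using assms(3) norm_triangle_ineq[of "z * v j" "y j"] by (simp add: norm_mult)
    also have "\<dots> \<le> cmod z * (L * \<nu>^j) + K * \<nu>^j" using A B by linarith
    also have "\<dots> \<le> L * \<nu>^Suc j" using C by (simp add: algebra_simps)
    finally show ?case .
  qed
  then show ?thesis using nu expd_def by blast
qed

lemma R4:
  fixes Q :: "complex poly"
  assumes "Q \<noteq> 0" "\<forall>z. poly Q z = 0 \<longrightarrow> cmod z < 1" "\<forall>j. ap Q v j = 0"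
  shows "expd v"
  using assms
proof (induction "degree Q" arbitrary: Q v)
  case 0
  then have c: "Q = [:coeff Q 0:]" "coeff Q 0 \<noteq> 0" using deg0_const by metis+
  have "v j = 0" for j using 0 c ap_const[of "coeff Q 0" v j] by simp
  then show ?case unfolding expd_def by (intro exI[of _ 0] exI[of _ "1/2"]) auto
next
  case (Suc n)
  then have "degree Q > 0" by simp
  then obtain z Q' where zQ: "Q = [:-z,1:] * Q'" "poly Q z = 0" "degree Q' = degree Q - 1"
    using poly_root_factor by blast
  define y where "y = ap [:-z,1:] v"
  have "Q' \<noteq> 0" using Suc zQ by auto
  moreover have "\<forall>j. ap Q' y j = 0" using Suc(5) zQ(1) unfolding y_def
    by (metis ap_mult mult.commute)
  moreover have "n = degree Q'" using Suc(2) zQ(3) by simp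
  moreover have "\<forall>z. poly Q' z = 0 \<longrightarrow> cmod z < 1" using Suc(4) zQ(1) by simp
  ultimately have "expd y" using Suc(1) by blast
  moreover have "\<forall>j. v (Suc j) = z * v j + y j" by (simp add: y_def ap_lin)
  moreover have "cmod z < 1" using Suc(4) zQ(2) by blast
  ultimately show ?case using expd_step by blast
qed

lemma ap_monic:
  assumes "lead_coeff Q = 1" "degree Q = m"
  shows "ap Q v j = v (j + m) + (\<Sum>i<m. coeff Q i * v (j+i))"
  using assms by (simp add: ap_def lessThan_Suc_atMost[symmetric] del: lessThan_Suc_atMost)

lemma R2:
  assumes "lead_coeff Q = 1" "degree Q = m" "\<forall>j. ap Q v j = 0" "\<forall>i<m. v i = 0"
  shows "v n = 0"
proof (induction n rule: less_induct)
  case (less n)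
  show ?case
  proof (cases "n < m")
    case True then show ?thesis using assms by auto
  next
    case False
    then obtain j where j: "n = j + m" by (metis add.commute le_iff_add not_less)
    have "(\<Sum>i<m. coeff Q i * v (j+i)) = 0"
      by (rule sum.neutral) (use less j in auto)
    then show ?thesis using assms(3) ap_monic[OF assms(1,2), of v j] j by simp
  qed
qed

definition stepop :: "nat \<Rightarrow> ((nat \<Rightarrow> 'a) \<Rightarrow> 'a) \<Rightarrow> (nat \<Rightarrow> 'a) \<Rightarrow> nat \<Rightarrow> 'a" where
  "stepop m Nx s i = (if i + 1 < m then s (i+1) else Nx s)"

definition seqgen :: "nat \<Rightarrow> ((nat \<Rightarrow> 'a) \<Rightarrow> 'a) \<Rightarrow> (nat \<Rightarrow> 'a) \<Rightarrow> nat \<Rightarrow> 'a" where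
  "seqgen m Nx s0 n = ((stepop m Nx)^^n) s0 0"

lemma stepop_shift: "Suc i < m \<Longrightarrow> ((stepop m Nx)^^(Suc n)) s i = ((stepop m Nx)^^n) s (Suc i)"
  by (simp only: funpow.simps comp_apply) (simp add: stepop_def)

lemma stepop_idx: "i < m \<Longrightarrow> ((stepop m Nx)^^n) s i = ((stepop m Nx)^^(n+i)) s 0"
proof (induction i arbitrary: n)
  case 0 then show ?case by simp
next
  case (Suc i)
  have "((stepop m Nx)^^n) s (Suc i) = ((stepop m Nx)^^(Suc n)) s i"
    by (rule stepop_shift[OF Suc(2), symmetric])
  also have "\<dots> = ((stepop m Nx)^^(Suc n + i)) s 0" by (rule Suc.IH) (use Suc(2) in simp)
  finally show ?case by simp
qed

lemma seqgen_init: "i < m \<Longrightarrow> seqgen m Nx s0 i = s0 i"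
  unfolding seqgen_def using stepop_idx[where i=i and m=m and Nx=Nx and n=0 and s=s0] by simp

lemma seqgen_rec:
  assumes "m > 0" "\<And>s s'. (\<forall>i<m. s i = s' i) \<Longrightarrow> Nx s = Nx s'"
  shows "seqgen m Nx s0 (n + m) = Nx (\<lambda>i. seqgen m Nx s0 (n + i))"
proof -
  have "seqgen m Nx s0 (n+m) = ((stepop m Nx)^^(Suc n)) s0 (m - 1)"
    unfolding seqgen_def using stepop_idx[where i="m-1" and m=m and Nx=Nx and n="Suc n" and s=s0] assms(1) by simp
  also have "\<dots> = Nx (((stepop m Nx)^^n) s0)" using assms(1) by (simp add: stepop_def)
  also have "\<dots> = Nx (\<lambda>i. seqgen m Nx s0 (n + i))"
  proof (rule assms(2), intro allI impI)
    fix i assume "i < m"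
    show "(stepop m Nx ^^ n) s0 i = seqgen m Nx s0 (n + i)"
      unfolding seqgen_def by (rule stepop_idx[OF \<open>i < m\<close>])
  qed
  finally show ?thesis .
qed

lemma R3:
  fixes Q :: "'a::comm_ring_1 poly"
  assumes "lead_coeff Q = 1" "degree Q = m"
  shows "\<exists>v. (\<forall>j. ap Q v j = 0) \<and> (\<forall>i<m. v i = init i)"
proof (cases "m = 0")
  case True
  have c1: "coeff Q 0 = 1" using assms True by simp
  then have "Q \<noteq> 0" by auto
  moreover have "degree Q = 0" using assms True by simp
  ultimately have "Q = [:coeff Q 0:]" using deg0_const[of Q] by blast
  then have "Q = 1" using c1 by (simp add: one_pCons)
  then show ?thesis using True by (intro exI[of _ "\<lambda>_. 0"]) (simp add: ap_def)
next
  case False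
  define Nx where "Nx = (\<lambda>s::nat\<Rightarrow>'a. - (\<Sum>i<m. coeff Q i * s i))"
  define v where "v = seqgen m Nx init"
  have rec: "v (n + m) = Nx (\<lambda>i. v (n + i))" for n
  proof -
    have "m > 0" using False by simp
    then show ?thesis unfolding v_def by (rule seqgen_rec) (auto simp: Nx_def)
  qed
  show ?thesis
  proof (intro exI[of _ v] conjI allI impI)
    fix j show "ap Q v j = 0" by (simp add: ap_monic[OF assms] rec Nx_def)
  next
    fix i assume "i < m" then show "v i = init i" by (simp add: v_def seqgen_init)
  qed
qed




definition cnt :: "real \<Rightarrow> complex poly \<Rightarrow> nat" where
  "cnt \<rho> H = (\<Sum>z\<in>{z. poly H z = 0 \<and> cmod z < \<rho>}. order z H)"

lemma cnt_smult: "c \<noteq> 0 \<Longrightarrow> cnt \<rho> (smult c H) = cnt \<rho> H"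
  unfolding cnt_def by (simp add: order_smult)

lemma cnt_const: "c \<noteq> 0 \<Longrightarrow> cnt \<rho> [:c:] = 0"
  unfolding cnt_def by simp

lemma order_lin: "order w [:-z,1:] = (if w = z then 1 else (0::nat))"
proof (cases "w = z")
  case True then show ?thesis using order_power_n_n[of z 1] by simp
next
  case False then show ?thesis by (simp add: order_0I)
qed

lemma cnt_lin:
  assumes "H \<noteq> 0"
  shows "cnt \<rho> ([:-z,1:] * H) = cnt \<rho> H + (if cmod z < \<rho> then 1 else 0)"
proof -
  define S where "S = {w. poly H w = 0 \<and> cmod w < \<rho>}"
  define S' where "S' = {w. poly ([:-z,1:] * H) w = 0 \<and> cmod w < \<rho>}"
  have "[:-z,1:] \<noteq> 0" by simp
  then have nz: "[:-z,1:] * H \<noteq> 0" using assms by (simp only: mult_eq_0_iff) simp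
  have fin: "finite S'" unfolding S'_def using poly_roots_finite[OF nz] by (rule rev_finite_subset) auto
  have sub: "S \<subseteq> S'" unfolding S_def S'_def by auto
  have ord: "order w ([:-z,1:] * H) = order w H + (if w = z then 1 else 0)" for w
    using order_mult[OF nz, of w] order_lin[of w z] by simp
  have "cnt \<rho> ([:-z,1:] * H) = (\<Sum>w\<in>S'. order w H) + (\<Sum>w\<in>S'. if w = z then 1 else 0)"
    unfolding cnt_def S'_def[symmetric] ord by (simp add: sum.distrib)
  also have "(\<Sum>w\<in>S'. order w H) = (\<Sum>w\<in>S. order w H)"
    by (rule sum.mono_neutral_right[OF fin sub]) (auto simp: S_def S'_def order_root assms)
  also have "(\<Sum>w\<in>S'. if w = z then 1 else (0::nat)) = (if z \<in> S' then 1 else 0)"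
    using fin by (simp add: sum.delta)
  also have "(z \<in> S') = (cmod z < \<rho>)" unfolding S'_def by simp
  finally show ?thesis unfolding cnt_def S_def by simp
qed

lemma cnt_xpow: "\<rho> > 0 \<Longrightarrow> cnt \<rho> ([:0,1:]^r) = r"
proof (induction r)
  case 0 then show ?case using cnt_const[of 1 \<rho>] by (simp add: one_pCons)
next
  case (Suc r)
  have e: "[:- (0::complex), 1:] = [:0,1:]" by simp
  have "([:0,1:]::complex poly)^Suc r = [:-0,1:] * [:0,1:]^r" by (simp only: power_Suc e)
  then show ?case using cnt_lin[of "[:0,1:]^r" \<rho> 0] Suc by simp
qed

lemma split_poly:
  fixes P :: "complex poly"
  assumes "P \<noteq> 0" "\<forall>z. cmod z = 1 \<longrightarrow> poly P z \<noteq> 0"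
  shows "\<exists>Q R. P = Q * R \<and> lead_coeff Q = 1 \<and> degree Q = cnt 1 P \<and> R \<noteq> 0 \<and>
           (\<forall>z. poly Q z = 0 \<longrightarrow> cmod z < 1) \<and> (\<forall>z. poly R z = 0 \<longrightarrow> cmod z > 1)"
  using assms
proof (induction "degree P" arbitrary: P)
  case 0
  then have c: "P = [:coeff P 0:]" "coeff P 0 \<noteq> 0" using deg0_const by metis+
  have cP: "cnt 1 P = 0" using c cnt_const[of "coeff P 0" 1] by simp
  have rP: "\<forall>z. poly P z = 0 \<longrightarrow> cmod z > 1" using c by (metis poly_const_conv)
  have "P = 1 * P" "lead_coeff (1::complex poly) = 1" "degree (1::complex poly) = cnt 1 P"
       "\<forall>z. poly (1::complex poly) z = 0 \<longrightarrow> cmod z < 1" using cP by auto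
  then show ?case using rP 0(2) by blast
next
  case (Suc n)
  then have "degree P > 0" by simp
  then obtain z P' where zP: "P = [:-z,1:] * P'" "poly P z = 0" "degree P' = degree P - 1"
    using poly_root_factor by blast
  have P'0: "P' \<noteq> 0" using Suc(3) zP(1) by auto
  have "\<forall>z. cmod z = 1 \<longrightarrow> poly P' z \<noteq> 0" using Suc(4) zP(1) by auto
  moreover have "n = degree P'" using Suc(2) zP(3) by simp
  ultimately obtain Q R where QR: "P' = Q * R" "lead_coeff Q = 1" "degree Q = cnt 1 P'" "R \<noteq> 0"
      "\<forall>z. poly Q z = 0 \<longrightarrow> cmod z < 1" "\<forall>z. poly R z = 0 \<longrightarrow> cmod z > 1"
    using Suc(1)[OF _ P'0] by blast
  have cP: "cnt 1 P = cnt 1 P' + (if cmod z < 1 then 1 else 0)"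
    unfolding zP(1) by (rule cnt_lin[OF P'0])
  have Q0: "Q \<noteq> 0" using QR by auto
  have zne: "cmod z \<noteq> 1" using Suc(4) zP(2) by auto
  show ?case
  proof (cases "cmod z < 1")
    case True
    have a: "P = ([:-z,1:] * Q) * R" using zP(1) QR(1) by (metis mult.assoc)
    have b: "lead_coeff ([:-z,1:] * Q) = 1" using QR(2) by (simp only: lead_coeff_mult) simp
    have "degree ([:-z,1:] * Q) = degree [:-z,1:] + degree Q" using Q0 by (intro degree_mult_eq) auto
    then have c: "degree ([:-z,1:] * Q) = cnt 1 P" using cP True QR(3) by simp
    have d: "\<forall>w. poly ([:-z,1:] * Q) w = 0 \<longrightarrow> cmod w < 1" using QR(5) True by auto
    show ?thesis using a b c d QR(4,6) by blast
  next
    case False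
    then have z1: "cmod z > 1" using zne by simp
    have a: "P = Q * ([:-z,1:] * R)" using zP(1) QR(1) by (metis mult.left_commute)
    have d: "\<forall>w. poly ([:-z,1:] * R) w = 0 \<longrightarrow> cmod w > 1" using QR(6) z1 by auto
    have "[:-z,1:] \<noteq> 0" by simp
    then have e: "[:-z,1:] * R \<noteq> 0" using QR(4) by (simp only: mult_eq_0_iff) simp
    have c: "degree Q = cnt 1 P" using QR(3) cP False by simp
    show ?thesis using a c d e QR(2,5) by blast
  qed
qed

lemma zorder_poly:
  assumes "p \<noteq> 0"
  shows "zorder (poly p) z = int (order z p)"
proof -
  obtain q where q: "p = [:-z,1:]^order z p * q" "\<not> [:-z,1:] dvd q"
    using order_decomp[OF assms] by blast
  have "poly q z \<noteq> 0" using q(2) poly_eq_0_iff_dvd by blast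
  show ?thesis
  proof (rule zorder_eqI[of UNIV z "poly q"])
    show "poly q holomorphic_on UNIV" by (intro holomorphic_intros)
    fix w assume "w \<noteq> z"
    show "poly p w = poly q w * (w - z) powi int (order z p)"
      by (subst q(1)) (simp add: power_int_of_nat mult.commute)
  qed (use \<open>poly q z \<noteq> 0\<close> in auto)
qed

lemma rouche_poly:
  fixes F G :: "complex poly"
  assumes rho: "\<rho> > 0" and less: "\<forall>z. cmod z = \<rho> \<longrightarrow> cmod (poly G z - poly F z) < cmod (poly F z)"
  shows "cnt \<rho> G = cnt \<rho> F"
proof -
  have "cmod (poly G (of_real \<rho>) - poly F (of_real \<rho>)) < cmod (poly F (of_real \<rho>))"
    using less rho by simp
  then have F0: "F \<noteq> 0" and G0: "G \<noteq> 0" by auto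
  define \<gamma> where "\<gamma> = circlepath 0 \<rho>"
  have R: "(\<Sum>p\<in>{p\<in>UNIV. poly F p + (poly G p - poly F p) = 0}. winding_number \<gamma> p *
              zorder (\<lambda>p. poly F p + (poly G p - poly F p)) p)
        = (\<Sum>p\<in>{p\<in>UNIV. poly F p = 0}. winding_number \<gamma> p * zorder (poly F) p)"
  proof (rule Rouche_theorem)
    show "finite {p \<in> UNIV. poly F p + (poly G p - poly F p) = 0}"
      using poly_roots_finite[OF G0] by simp
    show "finite {p \<in> UNIV. poly F p = 0}" using poly_roots_finite[OF F0] by simp
    show "poly F holomorphic_on UNIV" by (intro holomorphic_intros)
    show "(\<lambda>z. poly G z - poly F z) holomorphic_on UNIV" by (intro holomorphic_intros)
    show "\<forall>z\<in>path_image \<gamma>. cmod (poly G z - poly F z) < cmod (poly F z)"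
      using less rho unfolding \<gamma>_def by auto
  qed (auto simp: \<gamma>_def)
  have conv: "(\<Sum>p\<in>{p. poly H p = 0}. winding_number \<gamma> p * zorder (poly H) p) = of_nat (cnt \<rho> H)"
    if H0: "H \<noteq> 0" and Hc: "\<forall>z. cmod z = \<rho> \<longrightarrow> poly H z \<noteq> 0" for H
  proof -
    have fin: "finite {p. poly H p = 0}" using poly_roots_finite[OF H0] .
    have w: "winding_number \<gamma> p * zorder (poly H) p = (if cmod p < \<rho> then of_nat (order p H) else 0)"
      if "poly H p = 0" for p
    proof (cases "cmod p < \<rho>")
      case True
      then have "winding_number \<gamma> p = 1" unfolding \<gamma>_def by (intro winding_number_circlepath) simp
      then show ?thesis using True zorder_poly[OF H0] by simp
    next
      case False
      then have "cmod p > \<rho>" using Hc that by force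
      then have "winding_number \<gamma> p = 0" unfolding \<gamma>_def
        by (intro winding_number_zero_outside[of _ "cball 0 \<rho>"]) (use rho in auto)
      then show ?thesis using False by simp
    qed
    have "(\<Sum>p\<in>{p. poly H p = 0}. winding_number \<gamma> p * zorder (poly H) p)
        = (\<Sum>p\<in>{p. poly H p = 0}. if cmod p < \<rho> then of_nat (order p H) else 0)"
      by (rule sum.cong) (auto simp: w)
    also have "\<dots> = (\<Sum>p\<in>{p. poly H p = 0 \<and> cmod p < \<rho>}. of_nat (order p H))"
    proof -
      have "{x\<in>{p. poly H p = 0}. cmod x < \<rho>} = {p. poly H p = 0 \<and> cmod p < \<rho>}" by auto
      then show ?thesis using fin by (simp add: sum.inter_filter[symmetric])
    qed
    also have "\<dots> = of_nat (cnt \<rho> H)" unfolding cnt_def by simp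
    finally show ?thesis .
  qed
  have Gc: "\<forall>z. cmod z = \<rho> \<longrightarrow> poly G z \<noteq> 0"
  proof (intro allI impI notI)
    fix z assume "cmod z = \<rho>" "poly G z = 0"
    then have "cmod (0 - poly F z) < cmod (poly F z)" using less by metis
    then show False by simp
  qed
  have Fc: "\<forall>z. cmod z = \<rho> \<longrightarrow> poly F z \<noteq> 0" using less by force
  have "of_nat (cnt \<rho> G) = (of_nat (cnt \<rho> F) :: complex)"
    using R conv[OF G0 Gc] conv[OF F0 Fc] by simp
  then show ?thesis by simp
qed




lemma sum_int_shift:
  "(\<Sum>l\<in>{- int r..int n - int r}. g l) = (\<Sum>i\<le>n. g (int i - int r))"
  by (rule sum.reindex_bij_witness[where i="\<lambda>i. int i - int r" and j="\<lambda>l. nat (l + int r)"]) auto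

lemma pderiv_sum: "pderiv (\<Sum>i\<in>I. f i) = (\<Sum>i\<in>I. pderiv (f i))"
  by (induction I rule: infinite_finite_induct) (auto simp: pderiv_add)

lemma ap_cmult: "ap H (\<lambda>j. c * v j) j = c * ap H v j"
  unfolding ap_def by (simp add: sum_distrib_left algebra_simps)

lemma ap_diff: "ap H (\<lambda>j. v j - w j) j = ap H v j - ap H w j"
  unfolding ap_def by (simp add: sum_subtractf algebra_simps)

locale setting =
  fixes a lam :: real and A :: "int \<Rightarrow> real" and p r k :: nat
    and \<alpha> \<beta> :: "nat \<Rightarrow> real"
  assumes a0: "a \<noteq> 0"
    and Ar0: "A (- int r) \<noteq> 0" and Ap0: "A (int p) \<noteq> 0"
    and k1: "k \<ge> 1" and \<alpha>k: "\<alpha> k = 1" and \<alpha>\<beta>0: "\<bar>\<alpha> 0\<bar> + \<bar>\<beta> 0\<bar> > 0"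
    and lam0: "lam > 0"
    and A1a: "(\<Sum>l\<in>{- int r..int p}. A l) = 0" and A1b: "(\<Sum>l\<in>{- int r..int p}. of_int l * A l) = a"
    and A2a: "(\<Sum>\<sigma>\<le>k. \<alpha> \<sigma>) = 0" and A2b: "(\<Sum>\<sigma>\<le>k. of_nat \<sigma> * \<alpha> \<sigma>) = (\<Sum>\<sigma><k. \<beta> \<sigma>)"
    and A3: "stable_scheme A r p k \<alpha> \<beta> lam"
    and A4: "\<forall>\<theta>\<in>{-pi..pi} - {0}. symbol A r p (cis \<theta>) \<noteq> 0"
begin

definition Fs :: "int \<Rightarrow> real" where "Fs l = (\<Sum>t\<in>{- int r..l}. A t)"
definition cc :: "nat \<Rightarrow> real" where "cc n = (if n < p + r then - Fs (int n - int r) else 0)"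
definition PP :: "'b::{real_algebra_1,comm_ring_1} poly" where
  "PP = (\<Sum>i<p+r. monom (of_real (cc i)) i)"
definition AP :: "'b::{real_algebra_1,comm_ring_1} poly" where
  "AP = (\<Sum>i\<le>p+r. monom (of_real (A (int i - int r))) i)"

lemma pr_pos: "p + r > 0"
proof (rule ccontr)
  assume "\<not> p + r > 0"
  then have "p = 0" "r = 0" by auto
  then show False using A1a Ap0 by simp
qed

lemma coeff_PP: "coeff PP n = of_real (cc n)"
  unfolding PP_def coeff_sum coeff_monom by (auto simp: cc_def)

lemma coeff_AP: "coeff AP n = (if n \<le> p + r then of_real (A (int n - int r)) else 0)"
  unfolding AP_def coeff_sum coeff_monom by auto

lemma Fs_step: "l \<ge> - int r \<Longrightarrow> Fs l = Fs (l - 1) + A l"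
proof -
  assume "l \<ge> - int r"
  then have "{- int r..l} = insert l {- int r..l-1}" by auto
  then show ?thesis unfolding Fs_def by simp
qed

lemma Fs_low: "Fs (- int r - 1) = 0" unfolding Fs_def by simp
lemma Fs_p: "Fs (int p) = 0" unfolding Fs_def using A1a by simp

lemma AP_factor: "(AP :: 'b::{real_algebra_1,comm_ring_1} poly) = [:-1,1:] * PP"
proof (rule poly_eqI)
  fix n
  have m: "[:-1,1:] * (PP::'b poly) = pCons 0 PP - PP" by simp
  show "coeff (AP::'b poly) n = coeff ([:-1,1:] * PP) n"
  proof (cases n)
    case 0
    then show ?thesis using pr_pos Fs_step[of "- int r"] Fs_low
      by (simp add: m coeff_AP coeff_PP cc_def)
  next
    case (Suc n')
    have "coeff ([:-1,1:] * (PP::'b poly)) n = of_real (cc n' - cc n)"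
      by (simp add: m Suc coeff_PP)
    also have "cc n' - cc n = (if n \<le> p + r then A (int n - int r) else 0)"
    proof -
      consider "n < p + r" | "n = p + r" | "n > p + r" by linarith
      then show ?thesis
      proof cases
        case 1
        then show ?thesis using Fs_step[of "int n - int r"] Suc by (simp add: cc_def)
      next
        case 2
        have e1: "int n' - int r = int p - 1" using Suc 2 by simp
        have "cc n' - cc n = - Fs (int p - 1)" using 2 Suc e1 by (simp add: cc_def)
        also have "\<dots> = A (int p)" using Fs_step[of "int p"] Fs_p by simp
        also have "\<dots> = (if n \<le> p+r then A (int n - int r) else 0)" using 2 by simp
        finally show ?thesis .
      next
        case 3
        then show ?thesis using Suc by (simp add: cc_def)
      qed
    qed
    finally show ?thesis by (simp add: coeff_AP)
  qed
qed

lemma degree_PP: "degree (PP::'b::{real_algebra_1,comm_ring_1} poly) < p + r"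
proof -
  have "degree (PP::'b poly) \<le> p + r - 1" by (rule degree_le) (auto simp: coeff_PP cc_def)
  then show ?thesis using pr_pos by arith
qed

lemma ap_PP: "ap PP v j = (\<Sum>i<p+r. of_real (cc i) * v (j+i))"
  using ap_sum[OF degree_PP] by (simp add: coeff_PP)

lemma num_flux_PP: "num_flux A r p w = (\<Sum>i<p+r. cc i * w i)"
proof -
  have "num_flux A r p w = (\<Sum>l\<in>{- int r..int (p + r - 1) - int r}. flux_coeff A r l * w (nat (l + int r)))"
    unfolding num_flux_def using pr_pos by (intro sum.cong) auto
  also have "\<dots> = (\<Sum>i\<le>p + r - 1. flux_coeff A r (int i - int r) * w i)"
    by (simp only: sum_int_shift) simp
  also have "\<dots> = (\<Sum>i<p + r. cc i * w i)"
    using pr_pos by (intro sum.cong) (auto simp: cc_def flux_coeff_def Fs_def)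
  finally show ?thesis .
qed

lemma profile_iff:
  "boundary_layer_profile A r p u v \<longleftrightarrow>
     (\<forall>j<r. v j = - u) \<and> (\<forall>j. ap PP v j = 0) \<and> v \<longlonglongrightarrow> 0"
proof -
  have "num_flux A r p (\<lambda>i. u + v (j + i)) = num_flux A r p (\<lambda>_. u) + ap PP v j" for j
    by (simp add: num_flux_PP ap_PP algebra_simps sum.distrib)
  then show ?thesis unfolding boundary_layer_profile_def by auto
qed

lemma poly_PP_real: "poly (PP::complex poly) (of_real x) = of_real (poly PP x)"
  unfolding PP_def poly_sum poly_monom by simp

lemma ap_PP_real: "ap (PP::complex poly) (\<lambda>j. of_real (v j)) j = of_real (ap PP v j)"
  by (simp add: ap_PP)

lemma ap_PP_Re: "Re (ap (PP::complex poly) w j) = ap PP (\<lambda>j. Re (w j)) j"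
  by (simp add: ap_PP)

lemma poly_PP_1: "poly (PP::real poly) 1 = a"
proof -
  have "pderiv (AP::real poly) = [:-1,1:] * pderiv PP + PP * pderiv [:-1,1:]"
    by (simp only: AP_factor pderiv_mult)
  then have "poly (pderiv (AP::real poly)) 1 = poly PP 1" by (simp add: pderiv_pCons)
  moreover have "poly (pderiv (AP::real poly)) 1 = (\<Sum>i\<le>p+r. of_nat i * A (int i - int r))"
    unfolding AP_def pderiv_sum pderiv_monom poly_sum poly_monom by simp
  moreover have "(\<Sum>i\<le>p+r. of_nat i * A (int i - int r)) = a"
  proof -
    have "a = (\<Sum>l\<in>{- int r..int (p+r) - int r}. of_int l * A l)" using A1b by simp
    also have "\<dots> = (\<Sum>i\<le>p+r. of_int (int i - int r) * A (int i - int r))" by (rule sum_int_shift)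
    also have "\<dots> = (\<Sum>i\<le>p+r. of_nat i * A (int i - int r)) - of_nat r * (\<Sum>i\<le>p+r. A (int i - int r))"
      by (simp add: algebra_simps sum_subtractf sum_distrib_left)
    also have "(\<Sum>i\<le>p+r. A (int i - int r)) = 0"
      using A1a sum_int_shift[of A r "p+r"] by simp
    finally show ?thesis by simp
  qed
  ultimately show ?thesis by simp
qed

lemma poly_AP_symbol:
  assumes "z \<noteq> 0"
  shows "poly (AP::complex poly) z = z ^ r * symbol A r p z"
proof -
  have "symbol A r p z = (\<Sum>l\<in>{- int r..int (p+r) - int r}. complex_of_real (A l) * z powi l)"
    unfolding symbol_def by simp
  also have "\<dots> = (\<Sum>i\<le>p+r. complex_of_real (A (int i - int r)) * z powi (int i - int r))"
    by (rule sum_int_shift)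
  finally have "z ^ r * symbol A r p z = (\<Sum>i\<le>p+r. complex_of_real (A (int i - int r)) * (z ^ r * z powi (int i - int r)))"
    by (simp add: sum_distrib_left algebra_simps)
  also have "\<dots> = (\<Sum>i\<le>p+r. complex_of_real (A (int i - int r)) * z ^ i)"
  proof (rule sum.cong)
    fix i
    have "z powi (int r + (int i - int r)) = z powi int r * z powi (int i - int r)"
      by (rule power_int_add) (use assms in auto)
    then have "z ^ r * z powi (int i - int r) = z ^ i" by (simp add: power_int_of_nat)
    then show "complex_of_real (A (int i - int r)) * (z ^ r * z powi (int i - int r)) =
               complex_of_real (A (int i - int r)) * z ^ i" by (simp add: power_int_of_nat)
  qed simp
  finally show ?thesis unfolding AP_def poly_sum poly_monom by simp
qed

lemma PP_circle: "cmod z = 1 \<Longrightarrow> poly (PP::complex poly) z \<noteq> 0"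
proof -
  assume z1: "cmod z = 1"
  show ?thesis
  proof (cases "z = 1")
    case True
    then show ?thesis using poly_PP_real[of 1] poly_PP_1 a0 by simp
  next
    case False
    have z0: "z \<noteq> 0" using z1 by auto
    have zc: "z = cis (Arg z)" using cis_Arg[OF z0] z1 by (simp add: sgn_div_norm)
    have "Arg z \<noteq> 0" using False zc by (metis cis_zero)
    moreover have "Arg z \<in> {-pi..pi}" using Arg_bounded[of z] by auto
    ultimately have "symbol A r p z \<noteq> 0" using A4 zc by (metis Diff_iff singletonD)
    then have "poly (AP::complex poly) z \<noteq> 0" using poly_AP_symbol[OF z0] z0 by simp
    then show ?thesis unfolding AP_factor by auto
  qed
qed

lemma PP_nz: "(PP::complex poly) \<noteq> 0"
  using PP_circle[of 1] by auto

end



context setting begin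

definition schN :: "(nat \<Rightarrow> int \<Rightarrow> real) \<Rightarrow> int \<Rightarrow> real" where
  "schN s j = - (\<Sum>\<sigma><k. \<alpha> \<sigma> * s \<sigma> j) - lam * (\<Sum>\<sigma><k. \<beta> \<sigma> * (\<Sum>l\<in>{- int r..int p}. A l * s \<sigma> (j + l)))"

lemma sum_atMost_k: "(\<Sum>\<sigma>\<le>k. f \<sigma>) = (\<Sum>\<sigma><k. f \<sigma>) + (f k :: 'x::comm_monoid_add)"
  by (simp add: lessThan_Suc_atMost[symmetric] add.commute)

lemma sol_step:
  assumes "scheme_solution A r p k \<alpha> \<beta> lam u"
  shows "u j (n + k) = schN (\<lambda>\<sigma> j. u j (n + \<sigma>)) j"
proof -
  have "(\<Sum>\<sigma>\<le>k. \<alpha> \<sigma> * u j (n + \<sigma>))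
        + lam * (\<Sum>\<sigma><k. \<beta> \<sigma> * (\<Sum>l\<in>{- int r..int p}. A l * u (j + l) (n + \<sigma>))) = 0"
    using assms unfolding scheme_solution_def by blast
  then show ?thesis unfolding schN_def sum_atMost_k using \<alpha>k by (simp add: algebra_simps)
qed

definition gsol :: "(nat \<Rightarrow> int \<Rightarrow> real) \<Rightarrow> int \<Rightarrow> nat \<Rightarrow> real" where
  "gsol s0 j n = seqgen k schN s0 n j"

lemma gsol_init: "\<sigma> < k \<Longrightarrow> gsol s0 j \<sigma> = s0 \<sigma> j"
  unfolding gsol_def by (simp add: seqgen_init)

lemma gsol_sol: "scheme_solution A r p k \<alpha> \<beta> lam (gsol s0)"
proof -
  have rec: "seqgen k schN s0 (n + k) = schN (\<lambda>i. seqgen k schN s0 (n + i))" for n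
    by (rule seqgen_rec) (use k1 in \<open>auto simp: schN_def\<close>)
  show ?thesis unfolding scheme_solution_def gsol_def sum_atMost_k
    by (simp add: rec \<alpha>k schN_def algebra_simps)
qed

lemma agree:
  assumes solU: "scheme_solution A r p k \<alpha> \<beta> lam U" and solV: "scheme_solution A r p k \<alpha> \<beta> lam V"
    and clos: "\<And>n j \<sigma> l. P (n + k) j \<Longrightarrow> \<sigma> < k \<Longrightarrow> l \<in> {- int r..int p} \<Longrightarrow> P (n + \<sigma>) j \<and> P (n + \<sigma>) (j + l)"
    and init: "\<And>\<sigma> j. \<sigma> < k \<Longrightarrow> P \<sigma> j \<Longrightarrow> V j \<sigma> = U j \<sigma>"
  shows "P n j \<Longrightarrow> V j n = U j n"
proof (induction n arbitrary: j rule: less_induct)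
  case (less n)
  show ?case
  proof (cases "n < k")
    case True then show ?thesis using init less by blast
  next
    case False
    then obtain n' where n': "n = n' + k" by (metis add.commute le_iff_add not_less)
    have e1: "V j (n' + \<sigma>) = U j (n' + \<sigma>)" if s: "\<sigma> < k" for \<sigma>
    proof -
      have P1: "P (n' + \<sigma>) j" using clos[of n' j \<sigma> 0] less(2) n' s by auto
      show ?thesis using less(1)[of "n' + \<sigma>" j] P1 n' s by simp
    qed
    have e2: "V (j + l) (n' + \<sigma>) = U (j + l) (n' + \<sigma>)" if s: "\<sigma> < k" and l: "l \<in> {- int r..int p}" for \<sigma> l
    proof -
      have "P (n' + \<sigma>) (j + l)" using clos[OF _ s l] less(2) n' by blast
      then show ?thesis using less(1)[of "n' + \<sigma>" "j + l"] n' s by simp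
    qed
    have "schN (\<lambda>\<sigma> j. V j (n' + \<sigma>)) j = schN (\<lambda>\<sigma> j. U j (n' + \<sigma>)) j"
      unfolding schN_def using e1 e2 by simp
    then show ?thesis using sol_step[OF solV, of j n'] sol_step[OF solU, of j n'] n' by simp
  qed
qed

definition D :: int where "D = int (p + r)"

lemma D_pos: "D > 0" unfolding D_def by (simp only: of_nat_0_less_iff) (rule pr_pos)

lemma l_bound: "l \<in> {- int r..int p} \<Longrightarrow> \<bar>l\<bar> \<le> D"
  unfolding D_def by auto

lemma zero_sol: "scheme_solution A r p k \<alpha> \<beta> lam (\<lambda>j n. 0)"
  unfolding scheme_solution_def by simp

lemma trunc:
  "\<exists>C>0. \<forall>U c. scheme_solution A r p k \<alpha> \<beta> lam U \<and> (\<forall>j \<sigma>. \<sigma> < k \<longrightarrow> \<bar>U j \<sigma>\<bar> \<le> c) \<longrightarrow>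
     (\<forall>n L. L \<ge> 0 \<longrightarrow> (\<Sum>j\<in>{-L..L}. (U j n)\<^sup>2) \<le> C * (real k * c\<^sup>2 * (2 * (L + int n * D) + 1)))"
proof -
  obtain C where C: "C > 0" and stab: "\<And>dt u. 0 < dt \<Longrightarrow> dt \<le> 1 \<Longrightarrow> scheme_solution A r p k \<alpha> \<beta> lam u \<Longrightarrow>
           (\<forall>\<sigma><k. (\<lambda>j. (dt / lam) * (u j \<sigma>)\<^sup>2) summable_on UNIV) \<Longrightarrow>
           (\<forall>n. (\<lambda>j. (dt / lam) * (u j n)\<^sup>2) summable_on UNIV \<and>
                (\<Sum>\<^sub>\<infinity>j. (dt / lam) * (u j n)\<^sup>2)
                  \<le> C * (\<Sum>\<sigma><k. \<Sum>\<^sub>\<infinity>j. (dt / lam) * (u j \<sigma>)\<^sup>2))"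
    using A3 unfolding stable_scheme_def by blast
  show ?thesis
  proof (intro exI[of _ C] conjI C allI impI, elim conjE)
    fix U c n L
    assume solU: "scheme_solution A r p k \<alpha> \<beta> lam U" and bnd: "\<forall>j \<sigma>. \<sigma> < k \<longrightarrow> \<bar>U j \<sigma>\<bar> \<le> c"
      and L0: "(L::int) \<ge> 0"
    have c0: "c \<ge> 0" using bnd k1 by (meson abs_ge_zero order_trans less_le_trans zero_less_one)
    define M where "M = L + int n * D"
    have M0: "M \<ge> 0" using L0 D_pos unfolding M_def by simp
    define s0 where "s0 = (\<lambda>\<sigma> j. if \<bar>j\<bar> \<le> M then U j \<sigma> else 0)"
    define V where "V = gsol s0"
    have solV: "scheme_solution A r p k \<alpha> \<beta> lam V" unfolding V_def by (rule gsol_sol)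
    have Vi: "\<sigma> < k \<Longrightarrow> V j \<sigma> = s0 \<sigma> j" for \<sigma> j unfolding V_def by (rule gsol_init)
    have supp: "\<bar>j\<bar> > M \<Longrightarrow> V j \<sigma> = 0" if "\<sigma> < k" for j \<sigma> using Vi[OF that] s0_def by simp
    have agr: "V j n = U j n" if "\<bar>j\<bar> \<le> L" for j
    proof (rule agree[OF solU solV, where P="\<lambda>n j. \<bar>j\<bar> + int n * D \<le> M"])
      show "\<bar>j\<bar> + int n * D \<le> M" using that M_def by simp
    next
      fix \<sigma> j assume "\<sigma> < k" "\<bar>j\<bar> + int \<sigma> * D \<le> M"
      moreover have "int \<sigma> * D \<ge> 0" using D_pos by simp
      ultimately show "V j \<sigma> = U j \<sigma>" using Vi s0_def by simp
    next
      fix n j \<sigma> l assume h: "\<bar>j\<bar> + int (n + k) * D \<le> M" "\<sigma> < k" "l \<in> {- int r..int p}"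
      have "int (n + \<sigma>) * D + D \<le> int (n + k) * D"
      proof -
        have "int (n + \<sigma>) + 1 \<le> int (n + k)" using h(2) by simp
        then have "(int (n + \<sigma>) + 1) * D \<le> int (n + k) * D" using D_pos by (intro mult_right_mono) auto
        then show ?thesis by (simp add: algebra_simps)
      qed
      moreover have "\<bar>j + l\<bar> \<le> \<bar>j\<bar> + D" using l_bound[OF h(3)] by simp
      ultimately show "\<bar>j\<bar> + int (n + \<sigma>) * D \<le> M \<and> \<bar>j + l\<bar> + int (n + \<sigma>) * D \<le> M"
        using h(1) D_pos by linarith
    qed
    have fin: "finite {-M..M}" by simp
    have sumV: "(\<lambda>j. (1 / lam) * (V j \<sigma>)\<^sup>2) summable_on UNIV" if "\<sigma> < k" for \<sigma>
    proof -
      have "(\<lambda>j. (1 / lam) * (V j \<sigma>)\<^sup>2) summable_on UNIV \<longleftrightarrow> (\<lambda>j. (1 / lam) * (V j \<sigma>)\<^sup>2) summable_on {-M..M}"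
        by (rule summable_on_cong_neutral) (use supp[OF that] in auto)
      then show ?thesis using fin by simp
    qed
    have infV: "(\<Sum>\<^sub>\<infinity>j. (1 / lam) * (V j \<sigma>)\<^sup>2) \<le> (1 / lam) * c\<^sup>2 * (2 * M + 1)" if "\<sigma> < k" for \<sigma>
    proof -
      have "(\<Sum>\<^sub>\<infinity>j. (1 / lam) * (V j \<sigma>)\<^sup>2) = (\<Sum>\<^sub>\<infinity>j\<in>{-M..M}. (1 / lam) * (V j \<sigma>)\<^sup>2)"
        by (rule infsum_cong_neutral) (use supp[OF that] in auto)
      also have "\<dots> = (\<Sum>j\<in>{-M..M}. (1 / lam) * (V j \<sigma>)\<^sup>2)" using fin by simp
      also have "\<dots> \<le> (\<Sum>j\<in>{-M..M}. (1 / lam) * c\<^sup>2)"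
      proof (rule sum_mono)
        fix j assume "j \<in> {-M..M}"
        have "\<bar>V j \<sigma>\<bar> \<le> c" using Vi[OF that] bnd that c0 unfolding s0_def by auto
        then have "(V j \<sigma>)\<^sup>2 \<le> c\<^sup>2" by (metis abs_ge_zero power_mono power2_abs)
        then show "(1 / lam) * (V j \<sigma>)\<^sup>2 \<le> (1 / lam) * c\<^sup>2" using lam0 by (simp add: divide_right_mono)
      qed
      also have "\<dots> = (1 / lam) * c\<^sup>2 * (2 * M + 1)" using M0 by simp
      finally show ?thesis .
    qed
    have st: "(\<lambda>j. (1 / lam) * (V j n)\<^sup>2) summable_on UNIV \<and>
              (\<Sum>\<^sub>\<infinity>j. (1 / lam) * (V j n)\<^sup>2) \<le> C * (\<Sum>\<sigma><k. \<Sum>\<^sub>\<infinity>j. (1 / lam) * (V j \<sigma>)\<^sup>2)"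
      using stab[of 1 V] solV sumV by auto
    have "(\<Sum>j\<in>{-L..L}. (1 / lam) * (U j n)\<^sup>2) = (\<Sum>j\<in>{-L..L}. (1 / lam) * (V j n)\<^sup>2)"
      by (rule sum.cong) (use agr in auto)
    also have "\<dots> \<le> (\<Sum>\<^sub>\<infinity>j. (1 / lam) * (V j n)\<^sup>2)"
      by (rule finite_sum_le_infsum) (use st lam0 in auto)
    also have "\<dots> \<le> C * (\<Sum>\<sigma><k. \<Sum>\<^sub>\<infinity>j. (1 / lam) * (V j \<sigma>)\<^sup>2)" using st by blast
    also have "\<dots> \<le> C * (\<Sum>\<sigma><k. (1 / lam) * c\<^sup>2 * (2 * M + 1))"
      using C infV by (intro mult_left_mono sum_mono) auto
    also have "\<dots> = (1 / lam) * (C * (real k * c\<^sup>2 * (2 * M + 1)))" by (simp add: algebra_simps)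
    finally have "(1 / lam) * (\<Sum>j\<in>{-L..L}. (U j n)\<^sup>2) \<le> (1 / lam) * (C * (real k * c\<^sup>2 * (2 * M + 1)))"
      by (simp add: sum_distrib_left)
    then have "(\<Sum>j\<in>{-L..L}. (U j n)\<^sup>2) \<le> C * (real k * c\<^sup>2 * (2 * M + 1))"
      by (rule mult_left_le_imp_le) (use lam0 in simp)
    then show "(\<Sum>j\<in>{-L..L}. (U j n)\<^sup>2) \<le> C * (real k * c\<^sup>2 * (2 * (L + int n * D) + 1))"
      unfolding M_def by simp
  qed
qed

end



context setting begin

definition \<alpha>p :: "real \<Rightarrow> real" where "\<alpha>p \<tau> = (\<Sum>\<sigma>\<le>k. \<alpha> \<sigma> * \<tau> ^ \<sigma>)"
definition \<beta>p :: "real \<Rightarrow> real" where "\<beta>p \<tau> = (\<Sum>\<sigma><k. \<beta> \<sigma> * \<tau> ^ \<sigma>)"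

lemma cplx_sol:
  fixes W :: "int \<Rightarrow> nat \<Rightarrow> complex"
  assumes "\<And>j n. (\<Sum>\<sigma>\<le>k. of_real (\<alpha> \<sigma>) * W j (n + \<sigma>))
      + of_real lam * (\<Sum>\<sigma><k. of_real (\<beta> \<sigma>) * (\<Sum>l\<in>{- int r..int p}. of_real (A l) * W (j + l) (n + \<sigma>))) = 0"
  shows "scheme_solution A r p k \<alpha> \<beta> lam (\<lambda>j n. Re (W j n))"
    and "scheme_solution A r p k \<alpha> \<beta> lam (\<lambda>j n. Im (W j n))"
proof -
  show "scheme_solution A r p k \<alpha> \<beta> lam (\<lambda>j n. Re (W j n))"
    unfolding scheme_solution_def
  proof (intro allI)
    fix j n
    have "Re ((\<Sum>\<sigma>\<le>k. of_real (\<alpha> \<sigma>) * W j (n + \<sigma>))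
      + of_real lam * (\<Sum>\<sigma><k. of_real (\<beta> \<sigma>) * (\<Sum>l\<in>{- int r..int p}. of_real (A l) * W (j + l) (n + \<sigma>)))) = 0"
      using assms by simp
    then show "(\<Sum>\<sigma>\<le>k. \<alpha> \<sigma> * Re (W j (n + \<sigma>))) + lam * (\<Sum>\<sigma><k. \<beta> \<sigma> * (\<Sum>l\<in>{- int r..int p}. A l * Re (W (j + l) (n + \<sigma>)))) = 0"
      by (simp add: Re_sum)
  qed
  show "scheme_solution A r p k \<alpha> \<beta> lam (\<lambda>j n. Im (W j n))"
    unfolding scheme_solution_def
  proof (intro allI)
    fix j n
    have "Im ((\<Sum>\<sigma>\<le>k. of_real (\<alpha> \<sigma>) * W j (n + \<sigma>))
      + of_real lam * (\<Sum>\<sigma><k. of_real (\<beta> \<sigma>) * (\<Sum>l\<in>{- int r..int p}. of_real (A l) * W (j + l) (n + \<sigma>)))) = 0"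
      using assms by simp
    then show "(\<Sum>\<sigma>\<le>k. \<alpha> \<sigma> * Im (W j (n + \<sigma>))) + lam * (\<Sum>\<sigma><k. \<beta> \<sigma> * (\<Sum>l\<in>{- int r..int p}. A l * Im (W (j + l) (n + \<sigma>)))) = 0"
      by (simp add: Im_sum)
  qed
qed

lemma vonN:
  assumes \<tau>: "\<tau> > 1" and \<kappa>: "cmod \<kappa> = 1"
  shows "complex_of_real (\<alpha>p \<tau>) + complex_of_real (lam * \<beta>p \<tau>) * symbol A r p \<kappa> \<noteq> 0"
proof
  assume E: "complex_of_real (\<alpha>p \<tau>) + complex_of_real (lam * \<beta>p \<tau>) * symbol A r p \<kappa> = 0"
  have \<kappa>0: "\<kappa> \<noteq> 0" using \<kappa> by auto
  define W where "W = (\<lambda>j n. complex_of_real (\<tau> ^ n) * \<kappa> powi j)"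
  have symb: "(\<Sum>l\<in>{- int r..int p}. of_real (A l) * W (j + l) m) = W j m * symbol A r p \<kappa>" for j m
  proof -
    have "(\<Sum>l\<in>{- int r..int p}. of_real (A l) * W (j + l) m)
        = (\<Sum>l\<in>{- int r..int p}. W j m * (complex_of_real (A l) * \<kappa> powi l))"
      unfolding W_def by (intro sum.cong refl) (simp add: power_int_add \<kappa>0 algebra_simps)
    then show ?thesis unfolding symbol_def by (simp add: sum_distrib_left)
  qed
  have eq: "(\<Sum>\<sigma>\<le>k. of_real (\<alpha> \<sigma>) * W j (n + \<sigma>))
      + of_real lam * (\<Sum>\<sigma><k. of_real (\<beta> \<sigma>) * (\<Sum>l\<in>{- int r..int p}. of_real (A l) * W (j + l) (n + \<sigma>))) = 0" for j n
  proof -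
    have a1: "(\<Sum>\<sigma>\<le>k. of_real (\<alpha> \<sigma>) * W j (n + \<sigma>)) = W j n * complex_of_real (\<alpha>p \<tau>)"
      unfolding W_def \<alpha>p_def by (simp add: sum_distrib_left power_add algebra_simps)
    have a2: "(\<Sum>\<sigma><k. of_real (\<beta> \<sigma>) * (\<Sum>l\<in>{- int r..int p}. of_real (A l) * W (j + l) (n + \<sigma>)))
        = W j n * complex_of_real (\<beta>p \<tau>) * symbol A r p \<kappa>"
      unfolding symb unfolding W_def \<beta>p_def by (simp add: sum_distrib_left sum_distrib_right power_add algebra_simps)
    have "W j n * (complex_of_real (\<alpha>p \<tau>) + complex_of_real (lam * \<beta>p \<tau>) * symbol A r p \<kappa>) = 0"
      using E by simp
    then show ?thesis unfolding a1 a2 by (simp add: algebra_simps)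
  qed
  note sols = cplx_sol[OF eq]
  have normW: "cmod (W j n) = \<tau> ^ n" for j n
    unfolding W_def using \<tau> \<kappa> by (simp add: norm_mult norm_power_int norm_power)
  have bnd: "\<forall>j \<sigma>. \<sigma> < k \<longrightarrow> \<bar>f (W j \<sigma>)\<bar> \<le> \<tau> ^ k" if f: "\<And>z. \<bar>f z\<bar> \<le> cmod z" for f
  proof (intro allI impI)
    fix j \<sigma> assume "\<sigma> < k"
    have "\<tau> ^ \<sigma> \<le> \<tau> ^ k" using \<tau> \<open>\<sigma> < k\<close> by (intro power_increasing) auto
    then show "\<bar>f (W j \<sigma>)\<bar> \<le> \<tau> ^ k" using f[of "W j \<sigma>"] normW by simp
  qed
  obtain C where C: "C > 0" and tr: "\<And>U c n L. scheme_solution A r p k \<alpha> \<beta> lam U \<Longrightarrow> (\<forall>j \<sigma>. \<sigma> < k \<longrightarrow> \<bar>U j \<sigma>\<bar> \<le> c) \<Longrightarrow>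
      L \<ge> 0 \<Longrightarrow> (\<Sum>j\<in>{-L..L}. (U j n)\<^sup>2) \<le> C * (real k * c\<^sup>2 * (2 * (L + int n * D) + 1))"
    using trunc by blast
  have key: "(\<tau>^2) ^ n \<le> 4 * C * real k * (\<tau> ^ k)\<^sup>2" for n
  proof -
    define L where "L = int n * D"
    have L0: "L \<ge> 0" using D_pos unfolding L_def by simp
    have r1: "(\<Sum>j\<in>{-L..L}. (Re (W j n))\<^sup>2) \<le> C * (real k * (\<tau>^k)\<^sup>2 * (2 * (L + int n * D) + 1))"
      by (rule tr[OF sols(1) bnd L0]) (simp add: abs_Re_le_cmod)
    have r2: "(\<Sum>j\<in>{-L..L}. (Im (W j n))\<^sup>2) \<le> C * (real k * (\<tau>^k)\<^sup>2 * (2 * (L + int n * D) + 1))"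
      by (rule tr[OF sols(2) bnd L0]) (simp add: abs_Im_le_cmod)
    have "(\<Sum>j\<in>{-L..L}. (Re (W j n))\<^sup>2) + (\<Sum>j\<in>{-L..L}. (Im (W j n))\<^sup>2) = (\<Sum>j\<in>{-L..L}. (cmod (W j n))\<^sup>2)"
      by (simp add: sum.distrib[symmetric] cmod_power2)
    also have "\<dots> = (2 * L + 1) * (\<tau>^2)^n" using L0 by (simp add: normW power_mult[symmetric] power_mult_distrib mult.commute)
    finally have "(2 * L + 1) * (\<tau>^2)^n \<le> 2 * (C * (real k * (\<tau>^k)\<^sup>2 * (2 * (L + L) + 1)))"
      using r1 r2 unfolding L_def by linarith
    also have "\<dots> \<le> 2 * (C * (real k * (\<tau>^k)\<^sup>2 * (2 * (2 * L + 1))))"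
      using C L0 by (intro mult_left_mono) auto
    also have "\<dots> = (2 * L + 1) * (4 * C * real k * (\<tau> ^ k)\<^sup>2)" by (simp add: algebra_simps)
    finally show ?thesis using L0 by (simp add: mult_le_cancel_left_pos)
  qed
  obtain n where "4 * C * real k * (\<tau> ^ k)\<^sup>2 < (\<tau>^2) ^ n"
    using real_arch_pow[of "\<tau>^2"] \<tau> by (metis one_less_power zero_less_numeral)
  then show False using key[of n] by simp
qed

lemma B_nz: "(\<Sum>\<sigma><k. \<beta> \<sigma>) \<noteq> 0"
proof
  assume B0: "(\<Sum>\<sigma><k. \<beta> \<sigma>) = 0"
  define U where "U = (\<lambda>(j::int) (n::nat). real n)"
  have solU: "scheme_solution A r p k \<alpha> \<beta> lam U"
    unfolding scheme_solution_def
  proof (intro allI)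
    fix j n
    have "(\<Sum>\<sigma>\<le>k. \<alpha> \<sigma> * U j (n + \<sigma>)) = real n * (\<Sum>\<sigma>\<le>k. \<alpha> \<sigma>) + (\<Sum>\<sigma>\<le>k. of_nat \<sigma> * \<alpha> \<sigma>)"
      unfolding U_def by (simp add: sum.distrib sum_distrib_left algebra_simps)
    also have "\<dots> = 0" using A2a A2b B0 by simp
    finally have 1: "(\<Sum>\<sigma>\<le>k. \<alpha> \<sigma> * U j (n + \<sigma>)) = 0" .
    have "(\<Sum>l\<in>{- int r..int p}. A l * U (j + l) (n + \<sigma>)) = 0" for \<sigma>
      unfolding U_def using A1a by (simp add: sum_distrib_right[symmetric] mult.commute)
    then show "(\<Sum>\<sigma>\<le>k. \<alpha> \<sigma> * U j (n + \<sigma>)) + lam * (\<Sum>\<sigma><k. \<beta> \<sigma> * (\<Sum>l\<in>{- int r..int p}. A l * U (j + l) (n + \<sigma>))) = 0"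
      using 1 by simp
  qed
  have bnd: "\<forall>j \<sigma>. \<sigma> < k \<longrightarrow> \<bar>U j \<sigma>\<bar> \<le> real k" unfolding U_def by auto
  obtain C where C: "C > 0" and tr: "\<And>U c n L. scheme_solution A r p k \<alpha> \<beta> lam U \<Longrightarrow> (\<forall>j \<sigma>. \<sigma> < k \<longrightarrow> \<bar>U j \<sigma>\<bar> \<le> c) \<Longrightarrow>
      L \<ge> 0 \<Longrightarrow> (\<Sum>j\<in>{-L..L}. (U j n)\<^sup>2) \<le> C * (real k * c\<^sup>2 * (2 * (L + int n * D) + 1))"
    using trunc by blast
  have key: "(real n)\<^sup>2 \<le> 2 * C * real k ^ 3" for n
  proof -
    define L where "L = int n * D"
    have L0: "L \<ge> 0" using D_pos unfolding L_def by simp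
    have "(\<Sum>j\<in>{-L..L}. (U j n)\<^sup>2) \<le> C * (real k * (real k)\<^sup>2 * (2 * (L + int n * D) + 1))"
      by (rule tr[OF solU bnd L0])
    moreover have "(\<Sum>j\<in>{-L..L}. (U j n)\<^sup>2) = (2 * L + 1) * (real n)\<^sup>2" using L0 unfolding U_def by simp
    ultimately have "(2 * L + 1) * (real n)\<^sup>2 \<le> C * (real k * (real k)\<^sup>2 * (2 * (L + L) + 1))"
      unfolding L_def by simp
    also have "\<dots> \<le> C * (real k * (real k)\<^sup>2 * (2 * (2 * L + 1)))"
      using C L0 by (intro mult_left_mono) auto
    also have "\<dots> = (2 * L + 1) * (2 * C * real k ^ 3)" by (simp add: algebra_simps power2_eq_square power3_eq_cube)
    finally show ?thesis using L0 by (simp add: mult_le_cancel_left_pos)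
  qed
  define n where "n = nat (ceiling (2 * C * real k ^ 3)) + 1"
  have "2 * C * real k ^ 3 < real n" unfolding n_def by linarith
  also have "real n \<le> (real n)\<^sup>2" unfolding n_def by (simp add: power2_eq_square)
  finally show False using key[of n] by simp
qed

end



lemma cont_pos:
  fixes h :: "real \<Rightarrow> real"
  assumes "isCont h x0" "h x0 > 0"
  shows "\<exists>\<epsilon>>0. \<forall>\<tau>. \<bar>\<tau> - x0\<bar> < \<epsilon> \<longrightarrow> h \<tau> > 0"
proof -
  obtain d where d: "d > 0" "\<forall>x'. dist x' x0 < d \<longrightarrow> dist (h x') (h x0) < h x0"
    using assms continuous_at_eps_delta by metis
  show ?thesis
  proof (intro exI[of _ d] conjI allI impI d(1))
    fix \<tau> assume "\<bar>\<tau> - x0\<bar> < d"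
    then have "dist (h \<tau>) (h x0) < h x0" using d(2) by (simp add: dist_real_def)
    then show "h \<tau> > 0" by (simp add: dist_real_def abs_less_iff)
  qed
qed

context setting begin

definition GC :: "real \<Rightarrow> complex poly" where
  "GC \<tau> = smult (of_real (\<alpha>p \<tau>)) ([:0,1:]^r) + smult (of_real (lam * \<beta>p \<tau>)) AP"
definition GR :: "real \<Rightarrow> real poly" where
  "GR \<tau> = smult (\<alpha>p \<tau>) ([:0,1:]^r) + smult (lam * \<beta>p \<tau>) AP"

lemma poly_AP_real: "poly (AP::complex poly) (of_real x) = of_real (poly AP x)"
  unfolding AP_def poly_sum poly_monom by simp

lemma poly_GC_real: "poly (GC \<tau>) (of_real x) = of_real (poly (GR \<tau>) x)"
  unfolding GC_def GR_def by (simp add: poly_AP_real poly_monom)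

lemma poly_GC: "poly (GC \<tau>) z = of_real (\<alpha>p \<tau>) * z ^ r + of_real (lam * \<beta>p \<tau>) * poly AP z"
  unfolding GC_def by (simp add: poly_monom)

lemma poly_GR: "poly (GR \<tau>) x = \<alpha>p \<tau> * x ^ r + lam * \<beta>p \<tau> * poly AP x"
  unfolding GR_def by (simp add: poly_monom)

lemma GC_circle:
  assumes "\<tau> > 1" "cmod \<kappa> = 1"
  shows "poly (GC \<tau>) \<kappa> \<noteq> 0"
proof -
  have \<kappa>0: "\<kappa> \<noteq> 0" using assms by auto
  have "poly (GC \<tau>) \<kappa> = \<kappa> ^ r * (of_real (\<alpha>p \<tau>) + of_real (lam * \<beta>p \<tau>) * symbol A r p \<kappa>)"
    unfolding poly_GC poly_AP_symbol[OF \<kappa>0] by (simp add: algebra_simps)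
  then show ?thesis using vonN[OF assms] \<kappa>0 by simp
qed

lemma GC_nz: "\<tau> > 1 \<Longrightarrow> GC \<tau> \<noteq> 0"
  using GC_circle[of \<tau> 1] by auto

definition SA :: "real \<Rightarrow> real" where "SA \<rho> = (\<Sum>i\<le>p+r. \<bar>A (int i - int r)\<bar> * \<rho> ^ i)"

lemma AP_bound: "cmod (poly (AP::complex poly) z) \<le> SA (cmod z)"
proof -
  have "cmod (poly (AP::complex poly) z) = cmod (\<Sum>i\<le>p+r. complex_of_real (A (int i - int r)) * z ^ i)"
    unfolding AP_def poly_sum poly_monom by simp
  also have "\<dots> \<le> (\<Sum>i\<le>p+r. cmod (complex_of_real (A (int i - int r)) * z ^ i))" by (rule norm_sum)
  also have "\<dots> = SA (cmod z)" unfolding SA_def by (simp add: norm_mult norm_power)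
  finally show ?thesis .
qed

lemma SA_nonneg: "\<rho> \<ge> 0 \<Longrightarrow> SA \<rho> \<ge> 0"
  unfolding SA_def by (intro sum_nonneg mult_nonneg_nonneg) auto

lemma GC_diff:
  assumes "cmod z = \<rho>"
  shows "cmod (poly (GC \<tau>) z - poly (GC \<tau>0) z) \<le> \<bar>\<alpha>p \<tau> - \<alpha>p \<tau>0\<bar> * \<rho> ^ r + lam * \<bar>\<beta>p \<tau> - \<beta>p \<tau>0\<bar> * SA \<rho>"
proof -
  have "poly (GC \<tau>) z - poly (GC \<tau>0) z = of_real (\<alpha>p \<tau> - \<alpha>p \<tau>0) * z ^ r + of_real (lam * (\<beta>p \<tau> - \<beta>p \<tau>0)) * poly AP z"
    unfolding poly_GC by (simp add: algebra_simps)
  also have "cmod \<dots> \<le> cmod (of_real (\<alpha>p \<tau> - \<alpha>p \<tau>0) * z ^ r) + cmod (of_real (lam * (\<beta>p \<tau> - \<beta>p \<tau>0)) * poly AP z)"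
    by (rule norm_triangle_ineq)
  also have "\<dots> \<le> \<bar>\<alpha>p \<tau> - \<alpha>p \<tau>0\<bar> * \<rho> ^ r + lam * \<bar>\<beta>p \<tau> - \<beta>p \<tau>0\<bar> * SA \<rho>"
  proof (rule add_mono)
    show "cmod (of_real (\<alpha>p \<tau> - \<alpha>p \<tau>0) * z ^ r) \<le> \<bar>\<alpha>p \<tau> - \<alpha>p \<tau>0\<bar> * \<rho> ^ r"
      using assms by (simp only: norm_mult norm_of_real norm_power)
    have "cmod (of_real (lam * (\<beta>p \<tau> - \<beta>p \<tau>0)) * poly AP z) = lam * \<bar>\<beta>p \<tau> - \<beta>p \<tau>0\<bar> * cmod (poly AP z)"
      using lam0 by (simp only: norm_mult norm_of_real abs_mult)
    also have "\<dots> \<le> lam * \<bar>\<beta>p \<tau> - \<beta>p \<tau>0\<bar> * SA \<rho>"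
      using AP_bound[of z] assms lam0 by (intro mult_left_mono) auto
    finally show "cmod (of_real (lam * (\<beta>p \<tau> - \<beta>p \<tau>0)) * poly AP z) \<le> lam * \<bar>\<beta>p \<tau> - \<beta>p \<tau>0\<bar> * SA \<rho>" .
  qed
  finally show ?thesis .
qed

lemma cont_\<alpha>p: "isCont \<alpha>p x" unfolding \<alpha>p_def[abs_def] by (intro continuous_intros)
lemma cont_\<beta>p: "isCont \<beta>p x" unfolding \<beta>p_def[abs_def] by (intro continuous_intros)

lemma sphere_min:
  assumes "\<rho> > 0" "\<forall>z. cmod z = \<rho> \<longrightarrow> poly F z \<noteq> 0"
  shows "\<exists>mF>0. \<forall>z. cmod z = \<rho> \<longrightarrow> cmod (poly F z) \<ge> mF"
proof -
  have "\<exists>x\<in>sphere 0 \<rho>. \<forall>y\<in>sphere 0 \<rho>. cmod (poly F x) \<le> cmod (poly F y)"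
  proof (rule continuous_attains_inf)
    show "compact (sphere (0::complex) \<rho>)" by simp
    show "sphere (0::complex) \<rho> \<noteq> {}" using assms(1) by simp
    show "continuous_on (sphere 0 \<rho>) (\<lambda>x. cmod (poly F x))" by (intro continuous_intros)
  qed
  then obtain x where x: "cmod x = \<rho>" "\<forall>y. cmod y = \<rho> \<longrightarrow> cmod (poly F x) \<le> cmod (poly F y)" by auto
  show ?thesis using x assms(2) by (intro exI[of _ "cmod (poly F x)"]) auto
qed

lemma NEAR:
  assumes rho: "\<rho> > 0" and nz: "\<forall>z. cmod z = \<rho> \<longrightarrow> poly (GC \<tau>0) z \<noteq> 0"
  shows "\<exists>\<epsilon>>0. \<forall>\<tau>. \<bar>\<tau> - \<tau>0\<bar> < \<epsilon> \<longrightarrow> cnt \<rho> (GC \<tau>) = cnt \<rho> (GC \<tau>0)"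
proof -
  obtain mF where mF: "mF > 0" "\<forall>z. cmod z = \<rho> \<longrightarrow> cmod (poly (GC \<tau>0) z) \<ge> mF"
    using sphere_min[OF rho nz] by blast
  define h where "h = (\<lambda>\<tau>. mF - (\<bar>\<alpha>p \<tau> - \<alpha>p \<tau>0\<bar> * \<rho> ^ r + lam * \<bar>\<beta>p \<tau> - \<beta>p \<tau>0\<bar> * SA \<rho>))"
  have "isCont h \<tau>0" unfolding h_def using cont_\<alpha>p cont_\<beta>p by (intro continuous_intros) auto
  moreover have "h \<tau>0 > 0" unfolding h_def using mF by simp
  ultimately obtain \<epsilon> where \<epsilon>: "\<epsilon> > 0" "\<forall>\<tau>. \<bar>\<tau> - \<tau>0\<bar> < \<epsilon> \<longrightarrow> h \<tau> > 0" using cont_pos by blast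
  show ?thesis
  proof (intro exI[of _ \<epsilon>] conjI allI impI \<epsilon>(1))
    fix \<tau> assume "\<bar>\<tau> - \<tau>0\<bar> < \<epsilon>"
    then have h: "h \<tau> > 0" using \<epsilon> by blast
    show "cnt \<rho> (GC \<tau>) = cnt \<rho> (GC \<tau>0)"
    proof (rule rouche_poly[OF rho], intro allI impI)
      fix z assume z: "cmod z = \<rho>"
      have "cmod (poly (GC \<tau>) z - poly (GC \<tau>0) z) \<le> \<bar>\<alpha>p \<tau> - \<alpha>p \<tau>0\<bar> * \<rho> ^ r + lam * \<bar>\<beta>p \<tau> - \<beta>p \<tau>0\<bar> * SA \<rho>"
        by (rule GC_diff[OF z])
      also have "\<dots> < mF" using h unfolding h_def by simp
      also have "\<dots> \<le> cmod (poly (GC \<tau>0) z)" using mF z by blast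
      finally show "cmod (poly (GC \<tau>) z - poly (GC \<tau>0) z) < cmod (poly (GC \<tau>0) z)" .
    qed
  qed
qed

lemma S4: "\<tau>1 > 1 \<Longrightarrow> \<tau>2 > 1 \<Longrightarrow> cnt 1 (GC \<tau>1) = cnt 1 (GC \<tau>2)"
proof -
  assume t: "\<tau>1 > 1" "\<tau>2 > 1"
  have "(\<lambda>\<tau>. cnt 1 (GC \<tau>)) constant_on {1<..}"
  proof (rule locally_constant_imp_constant)
    show "connected {1::real<..}" by simp
  next
    fix a :: real assume "a \<in> {1<..}"
    then have a1: "a > 1" by simp
    obtain \<epsilon> where \<epsilon>: "\<epsilon> > 0" "\<forall>\<tau>. \<bar>\<tau> - a\<bar> < \<epsilon> \<longrightarrow> cnt 1 (GC \<tau>) = cnt 1 (GC a)"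
      using NEAR[of 1 a] GC_circle[OF a1] by auto
    show "\<exists>T. openin (top_of_set {1<..}) T \<and> a \<in> T \<and> (\<forall>x\<in>T. cnt 1 (GC x) = cnt 1 (GC a))"
    proof (intro exI[of _ "{1<..} \<inter> ball a \<epsilon>"] conjI)
      show "openin (top_of_set {1<..}) ({1<..} \<inter> ball a \<epsilon>)"
        by (rule openin_open_Int) simp
      show "a \<in> {1<..} \<inter> ball a \<epsilon>" using \<epsilon> a1 by auto
      show "\<forall>x\<in>{1<..} \<inter> ball a \<epsilon>. cnt 1 (GC x) = cnt 1 (GC a)"
      proof
        fix x assume "x \<in> {1<..} \<inter> ball a \<epsilon>"
        then have "\<bar>x - a\<bar> < \<epsilon>" by (simp add: dist_real_def abs_minus_commute[of a x])
        then show "cnt 1 (GC x) = cnt 1 (GC a)" using \<epsilon>(2) by blast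
      qed
    qed
  qed
  then show ?thesis using t unfolding constant_on_def by force
qed

lemma S3: "\<exists>\<tau>>1. cnt 1 (GC \<tau>) = r"
proof -
  define S\<alpha> where "S\<alpha> = (\<Sum>\<sigma><k. \<bar>\<alpha> \<sigma>\<bar>)"
  define S\<beta> where "S\<beta> = (\<Sum>\<sigma><k. \<bar>\<beta> \<sigma>\<bar>)"
  define \<tau> where "\<tau> = S\<alpha> + lam * S\<beta> * SA 1 + 2"
  have Sa0: "S\<alpha> \<ge> 0" "S\<beta> \<ge> 0" unfolding S\<alpha>_def S\<beta>_def by (auto intro: sum_nonneg)
  have SA0: "SA 1 \<ge> 0" by (rule SA_nonneg) simp
  have lSS: "lam * S\<beta> * SA 1 \<ge> 0" using lam0 Sa0 SA0 by simp
  have t1: "\<tau> > 1" unfolding \<tau>_def using Sa0 lSS by linarith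
  have pw: "\<tau> ^ \<sigma> \<le> \<tau> ^ (k - 1)" if "\<sigma> < k" for \<sigma> using t1 that by (intro power_increasing) auto
  have pk: "\<tau> ^ k = \<tau> * \<tau> ^ (k - 1)" using k1 by (metis Suc_diff_1 less_le_trans power_Suc zero_less_one)
  have tk0: "\<tau> ^ (k - 1) > 0" using t1 by simp
  have b1: "\<bar>\<Sum>\<sigma><k. \<alpha> \<sigma> * \<tau> ^ \<sigma>\<bar> \<le> S\<alpha> * \<tau> ^ (k - 1)"
  proof -
    have "\<bar>\<Sum>\<sigma><k. \<alpha> \<sigma> * \<tau> ^ \<sigma>\<bar> \<le> (\<Sum>\<sigma><k. \<bar>\<alpha> \<sigma>\<bar> * \<tau> ^ (k - 1))"
      by (rule order_trans[OF sum_abs sum_mono]) (use pw t1 in \<open>auto simp: abs_mult intro!: mult_left_mono\<close>)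
    then show ?thesis unfolding S\<alpha>_def by (simp add: sum_distrib_right)
  qed
  have b2: "\<bar>\<beta>p \<tau>\<bar> \<le> S\<beta> * \<tau> ^ (k - 1)"
  proof -
    have "\<bar>\<beta>p \<tau>\<bar> \<le> (\<Sum>\<sigma><k. \<bar>\<beta> \<sigma>\<bar> * \<tau> ^ (k - 1))" unfolding \<beta>p_def
      by (rule order_trans[OF sum_abs sum_mono]) (use pw t1 in \<open>auto simp: abs_mult intro!: mult_left_mono\<close>)
    then show ?thesis unfolding S\<beta>_def by (simp add: sum_distrib_right)
  qed
  have ap: "\<alpha>p \<tau> = \<tau> ^ k + (\<Sum>\<sigma><k. \<alpha> \<sigma> * \<tau> ^ \<sigma>)" unfolding \<alpha>p_def sum_atMost_k using \<alpha>k by simp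
  have "\<bar>\<alpha>p \<tau>\<bar> \<ge> \<tau> ^ (k - 1) * (\<tau> - S\<alpha>)" using ap b1 pk by (simp add: algebra_simps)
  moreover have "\<tau> ^ (k - 1) * (\<tau> - S\<alpha>) = \<tau> ^ (k - 1) * (lam * S\<beta> * SA 1) + 2 * \<tau> ^ (k - 1)"
    unfolding \<tau>_def by (simp add: algebra_simps)
  moreover have "lam * \<bar>\<beta>p \<tau>\<bar> * SA 1 \<le> \<tau> ^ (k - 1) * (lam * S\<beta> * SA 1)"
  proof -
    have "lam * \<bar>\<beta>p \<tau>\<bar> * SA 1 \<le> lam * (S\<beta> * \<tau> ^ (k - 1)) * SA 1"
      using b2 lam0 SA0 by (intro mult_right_mono mult_left_mono) auto
    then show ?thesis by (simp add: algebra_simps)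
  qed
  ultimately have big: "lam * \<bar>\<beta>p \<tau>\<bar> * SA 1 < \<bar>\<alpha>p \<tau>\<bar>" using tk0 by linarith
  have a0: "\<alpha>p \<tau> \<noteq> 0" using big lam0 SA0 by (smt (verit) mult_nonneg_nonneg abs_ge_zero)
  have "cnt 1 (GC \<tau>) = cnt 1 (smult (of_real (\<alpha>p \<tau>)) ([:0,1:]^r))"
  proof (rule rouche_poly, simp, intro allI impI)
    fix z :: complex assume z: "cmod z = 1"
    have "poly (GC \<tau>) z - poly (smult (of_real (\<alpha>p \<tau>)) ([:0,1:]^r)) z = of_real (lam * \<beta>p \<tau>) * poly AP z"
      unfolding poly_GC by (simp add: poly_monom)
    then have "cmod (poly (GC \<tau>) z - poly (smult (of_real (\<alpha>p \<tau>)) ([:0,1:]^r)) z) \<le> lam * \<bar>\<beta>p \<tau>\<bar> * SA 1"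
      using AP_bound[of z] z lam0 by (simp add: norm_mult abs_mult mult_left_mono)
    also have "\<dots> < \<bar>\<alpha>p \<tau>\<bar>" by (rule big)
    also have "\<bar>\<alpha>p \<tau>\<bar> = cmod (poly (smult (of_real (\<alpha>p \<tau>)) ([:0,1:]^r)) z)"
      using z by (simp add: norm_mult norm_power)
    finally show "cmod (poly (GC \<tau>) z - poly (smult (of_real (\<alpha>p \<tau>)) ([:0,1:]^r)) z)
        < cmod (poly (smult (of_real (\<alpha>p \<tau>)) ([:0,1:]^r)) z)" .
  qed
  also have "\<dots> = r" using a0 by (simp add: cnt_smult cnt_xpow)
  finally show ?thesis using t1 by blast
qed

end



lemma cnt_split:
  assumes "G \<noteq> 0" "t1 \<le> t2"
  shows "cnt t2 G = cnt t1 G + (\<Sum>z\<in>{z. poly G z = 0 \<and> cmod z < t2} - {z. poly G z = 0 \<and> cmod z < t1}. order z G)"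
proof -
  have fin: "finite {z. poly G z = 0 \<and> cmod z < t2}"
    using poly_roots_finite[OF assms(1)] by (rule rev_finite_subset) auto
  have sub: "{z. poly G z = 0 \<and> cmod z < t1} \<subseteq> {z. poly G z = 0 \<and> cmod z < t2}" using assms(2) by auto
  show ?thesis unfolding cnt_def using sum.subset_diff[OF sub fin, of "\<lambda>z. order z G"] by simp
qed

lemma cnt_same:
  assumes "\<forall>z. ta \<le> cmod z \<and> cmod z < tb \<longrightarrow> poly H z \<noteq> 0" "ta \<le> tb"
  shows "cnt ta H = cnt tb H"
proof -
  have "{z. poly H z = 0 \<and> cmod z < ta} = {z. poly H z = 0 \<and> cmod z < tb}"
    using assms by force
  then show ?thesis unfolding cnt_def by simp
qed

lemma ANN:
  assumes G0: "G \<noteq> 0" and r12: "\<rho>1 \<le> \<rho>" "\<rho> \<le> \<rho>2" and c: "cnt \<rho>2 G = cnt \<rho>1 G + 1"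
    and x: "poly G x = 0" "\<rho>1 \<le> cmod x" "cmod x < \<rho>2"
  shows "cnt \<rho> G = cnt \<rho>1 G + (if cmod x < \<rho> then 1 else 0)"
proof -
  define Zs where "Zs t = {z. poly G z = 0 \<and> cmod z < t}" for t
  have fin: "finite (Zs t)" for t unfolding Zs_def
    using poly_roots_finite[OF G0] by (rule rev_finite_subset) auto
  define Dd where "Dd = Zs \<rho>2 - Zs \<rho>1"
  have s1: "(\<Sum>z\<in>Dd. order z G) = 1"
    using cnt_split[OF G0, of \<rho>1 \<rho>2] r12 c unfolding Dd_def Zs_def by simp
  have xD: "x \<in> Dd" unfolding Dd_def Zs_def using x by auto
  have ox: "order x G \<ge> 1" using x(1) G0 order_root by (metis less_one not_le)
  have "(\<Sum>z\<in>Dd. order z G) = order x G + (\<Sum>z\<in>Dd - {x}. order z G)"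
    using fin xD unfolding Dd_def by (subst sum.remove) auto
  then have s0: "(\<Sum>z\<in>Dd - {x}. order z G) = 0" and ox1: "order x G = 1" using s1 ox by linarith+
  have "Dd - {x} = {}"
  proof (rule ccontr)
    assume "Dd - {x} \<noteq> {}"
    then obtain y where y: "y \<in> Dd - {x}" by blast
    have "finite (Dd - {x})" using fin unfolding Dd_def by auto
    then have "order y G = 0" using s0 y by simp
    moreover have "poly G y = 0" using y unfolding Dd_def Zs_def by auto
    ultimately show False using G0 order_root by blast
  qed
  then have Dx: "Dd = {x}" using xD by auto
  have "Zs \<rho> - Zs \<rho>1 \<subseteq> Dd" unfolding Dd_def Zs_def using r12 by auto
  then have E: "Zs \<rho> - Zs \<rho>1 = (if cmod x < \<rho> then {x} else {})"
    using Dx x unfolding Zs_def by auto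
  show ?thesis
    using cnt_split[OF G0 r12(1)] E ox1 unfolding Zs_def by (auto split: if_splits)
qed


lemma real_poly_nosign:
  fixes P :: "real poly"
  assumes "x0 < x1" "\<forall>x. x0 \<le> x \<and> x \<le> x1 \<longrightarrow> poly P x \<noteq> 0"
  shows "poly P x0 * poly P x1 > 0"
proof (rule ccontr)
  assume "\<not> poly P x0 * poly P x1 > 0"
  moreover have "poly P x0 * poly P x1 \<noteq> 0" using assms by auto
  ultimately have "poly P x0 * poly P x1 < 0" by linarith
  then obtain x where "x > x0" "x < x1" "poly P x = 0" using poly_IVT[OF assms(1)] by blast
  then show False using assms(2) by auto
qed

lemma neg_from_prod: "0 < x * y \<Longrightarrow> y < 0 \<Longrightarrow> x < (0::real)"
  by (rule ccontr) (use mult_nonneg_nonpos[of x y] in auto)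

context setting begin

lemma \<alpha>p1: "\<alpha>p 1 = 0" unfolding \<alpha>p_def using A2a by simp
lemma \<beta>p1: "\<beta>p 1 = (\<Sum>\<sigma><k. \<beta> \<sigma>)" unfolding \<beta>p_def by simp

lemma poly_AP_fac: "poly (AP::'b::{real_algebra_1,comm_ring_1} poly) x = (x - 1) * poly PP x"
  by (simp add: AP_factor algebra_simps)

lemma GC1_poly: "poly (GC 1) z = of_real (lam * (\<Sum>\<sigma><k. \<beta> \<sigma>)) * ((z - 1) * poly PP z)"
  unfolding poly_GC \<alpha>p1 \<beta>p1 poly_AP_fac by simp

lemma GR1_poly: "poly (GR 1) x = lam * (\<Sum>\<sigma><k. \<beta> \<sigma>) * ((x - 1) * poly PP x)"
proof -
  have h: "poly (AP::real poly) x = (x - 1) * poly (PP::real poly) x" by (rule poly_AP_fac)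
  show ?thesis unfolding poly_GR \<alpha>p1 \<beta>p1 h by simp
qed

lemma GC1_eq: "GC 1 = smult (of_real (lam * (\<Sum>\<sigma><k. \<beta> \<sigma>))) ([:-1,1:] * PP)"
  unfolding GC_def \<alpha>p1 \<beta>p1 AP_factor by simp

definition \<gamma> :: "real \<Rightarrow> real" where "\<gamma> \<tau> = (\<Sum>\<sigma>\<le>k. \<alpha> \<sigma> * (\<Sum>i<\<sigma>. \<tau> ^ i))"

lemma \<alpha>p_fac: "\<alpha>p \<tau> = (\<tau> - 1) * \<gamma> \<tau>"
proof -
  have "\<alpha>p \<tau> = (\<Sum>\<sigma>\<le>k. \<alpha> \<sigma> * \<tau> ^ \<sigma>) - (\<Sum>\<sigma>\<le>k. \<alpha> \<sigma>)" unfolding \<alpha>p_def using A2a by simp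
  also have "\<dots> = (\<Sum>\<sigma>\<le>k. \<alpha> \<sigma> * (\<tau> ^ \<sigma> - 1))" by (simp add: sum_subtractf algebra_simps)
  also have "\<dots> = (\<Sum>\<sigma>\<le>k. \<alpha> \<sigma> * ((\<tau> - 1) * (\<Sum>i<\<sigma>. \<tau> ^ i)))" by (simp only: power_diff_1_eq)
  also have "\<dots> = (\<tau> - 1) * \<gamma> \<tau>" unfolding \<gamma>_def by (simp add: sum_distrib_left algebra_simps)
  finally show ?thesis .
qed

lemma \<gamma>1: "\<gamma> 1 = (\<Sum>\<sigma><k. \<beta> \<sigma>)"
  unfolding \<gamma>_def using A2b by (simp add: mult.commute)

lemma cont_\<gamma>: "isCont \<gamma> x" unfolding \<gamma>_def[abs_def] by (intro continuous_intros)

lemma cont_GR: "isCont (\<lambda>\<tau>. poly (GR \<tau>) x) y"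
  unfolding poly_GR using cont_\<alpha>p cont_\<beta>p by (intro continuous_intros) auto

lemma radii: "\<exists>\<rho>1 \<rho>2. 0 < \<rho>1 \<and> \<rho>1 < 1 \<and> 1 < \<rho>2 \<and> (\<forall>z. \<rho>1 \<le> cmod z \<and> cmod z \<le> \<rho>2 \<longrightarrow> poly (PP::complex poly) z \<noteq> 0)"
proof -
  define Z where "Z = {z. poly (PP::complex poly) z = 0}"
  have finZ: "finite Z" unfolding Z_def using poly_roots_finite[OF PP_nz] .
  define S where "S = insert 1 ((\<lambda>z. \<bar>cmod z - 1\<bar>) ` Z)"
  define \<delta> where "\<delta> = Min S"
  have finS: "finite S" "S \<noteq> {}" unfolding S_def using finZ by auto
  have pos: "\<forall>s\<in>S. 0 < s"
  proof
    fix s assume "s \<in> S"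
    then consider "s = 1" | z where "z \<in> Z" "s = \<bar>cmod z - 1\<bar>" unfolding S_def by auto
    then show "0 < s"
    proof cases
      case 2 then have "cmod z \<noteq> 1" using PP_circle unfolding Z_def by auto
      then show ?thesis using 2 by simp
    qed simp
  qed
  have d0: "\<delta> > 0" unfolding \<delta>_def using Min_gr_iff[OF finS] pos by blast
  have d1: "\<delta> \<le> 1" unfolding \<delta>_def using finS by (simp add: S_def)
  have dz: "\<delta> \<le> \<bar>cmod z - 1\<bar>" if "z \<in> Z" for z unfolding \<delta>_def using finS that by (simp add: S_def)
  have "\<forall>z. 1 - \<delta>/2 \<le> cmod z \<and> cmod z \<le> 1 + \<delta>/2 \<longrightarrow> poly (PP::complex poly) z \<noteq> 0"
  proof (intro allI impI notI)
    fix z assume z: "1 - \<delta> / 2 \<le> cmod z \<and> cmod z \<le> 1 + \<delta> / 2" and "poly (PP::complex poly) z = 0"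
    then have "\<delta> \<le> \<bar>cmod z - 1\<bar>" using dz unfolding Z_def by blast
    then show False using z d0 by linarith
  qed
  moreover have "0 < 1 - \<delta>/2" "1 - \<delta>/2 < 1" "1 < 1 + \<delta>/2" using d0 d1 by auto
  ultimately show ?thesis by blast
qed

lemma S5: "\<exists>\<tau>>1. cnt 1 (GC \<tau>) = cnt 1 (PP::complex poly) + (if a > 0 then 1 else 0)"
proof -
  define B where "B = (\<Sum>\<sigma><k. \<beta> \<sigma>)"
  have B0: "B \<noteq> 0" unfolding B_def by (rule B_nz)
  define m where "m = cnt 1 (PP::complex poly)"
  obtain \<rho>1 \<rho>2 where rr: "0 < \<rho>1" "\<rho>1 < 1" "1 < \<rho>2"
    and noz: "\<forall>z. \<rho>1 \<le> cmod z \<and> cmod z \<le> \<rho>2 \<longrightarrow> poly (PP::complex poly) z \<noteq> 0"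
    using radii by blast
  have noz_r: "poly (PP::real poly) x \<noteq> 0" if "\<rho>1 \<le> x" "x \<le> \<rho>2" for x
  proof -
    have "poly (PP::complex poly) (of_real x) \<noteq> 0" using noz that rr by auto
    then show ?thesis using poly_PP_real[of x] by auto
  qed
  have lB: "lam * B \<noteq> 0" using lam0 B0 by simp
  have c1: "cnt \<rho>1 (GC 1) = m"
  proof -
    have "cnt \<rho>1 (GC 1) = cnt \<rho>1 ([:-1,1:] * (PP::complex poly))"
      unfolding GC1_eq B_def[symmetric] using lB by (simp add: cnt_smult)
    also have "\<dots> = cnt \<rho>1 (PP::complex poly)" using cnt_lin[OF PP_nz, of \<rho>1 1] rr by simp
    also have "\<dots> = m" unfolding m_def by (rule cnt_same) (use noz rr in auto)
    finally show ?thesis .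
  qed
  have c2: "cnt \<rho>2 (GC 1) = m + 1"
  proof -
    have "cnt \<rho>2 (GC 1) = cnt \<rho>2 ([:-1,1:] * (PP::complex poly))"
      unfolding GC1_eq B_def[symmetric] using lB by (simp add: cnt_smult)
    also have "\<dots> = cnt \<rho>2 (PP::complex poly) + 1" using cnt_lin[OF PP_nz, of \<rho>2 1] rr by simp
    also have "cnt \<rho>2 (PP::complex poly) = m" unfolding m_def by (rule cnt_same[symmetric]) (use noz rr in auto)
    finally show ?thesis .
  qed
  have sph: "poly (GC 1) z \<noteq> 0" if "cmod z = \<rho>" "\<rho> = \<rho>1 \<or> \<rho> = \<rho>2" for z \<rho>
  proof -
    have "z \<noteq> 1" using that rr by auto
    moreover have "poly PP z \<noteq> 0" using noz that rr by auto
    ultimately show ?thesis unfolding GC1_poly B_def[symmetric] using lB by simp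
  qed
  obtain \<epsilon>1 where e1: "\<epsilon>1 > 0" "\<forall>\<tau>. \<bar>\<tau> - 1\<bar> < \<epsilon>1 \<longrightarrow> cnt \<rho>1 (GC \<tau>) = cnt \<rho>1 (GC 1)"
    using NEAR[of \<rho>1 1] sph rr by auto
  obtain \<epsilon>2 where e2: "\<epsilon>2 > 0" "\<forall>\<tau>. \<bar>\<tau> - 1\<bar> < \<epsilon>2 \<longrightarrow> cnt \<rho>2 (GC \<tau>) = cnt \<rho>2 (GC 1)"
    using NEAR[of \<rho>2 1] sph rr by auto
  define g1 where "g1 = poly (GR 1) \<rho>1"
  define g2 where "g2 = poly (GR 1) \<rho>2"
  have P1: "poly (PP::real poly) \<rho>1 * a > 0"
    using real_poly_nosign[of \<rho>1 1 PP] noz_r rr poly_PP_1 by auto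
  have P2: "poly (PP::real poly) \<rho>2 * a > 0"
    using real_poly_nosign[of 1 \<rho>2 PP] noz_r rr poly_PP_1 by (auto simp: mult.commute)
  have g1nz: "g1 \<noteq> 0" unfolding g1_def GR1_poly B_def[symmetric] using lB rr P1 by auto
  have g2nz: "g2 \<noteq> 0" unfolding g2_def GR1_poly B_def[symmetric] using lB rr P2 by auto
  obtain \<epsilon>3 where e3: "\<epsilon>3 > 0" "\<forall>\<tau>. \<bar>\<tau> - 1\<bar> < \<epsilon>3 \<longrightarrow> poly (GR \<tau>) \<rho>1 * g1 > 0"
  proof -
    have "isCont (\<lambda>\<tau>. poly (GR \<tau>) \<rho>1 * g1) 1" using cont_GR by (intro continuous_intros) auto
    moreover have "poly (GR 1) \<rho>1 * g1 > 0" using g1nz unfolding g1_def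
      by (metis mult_pos_pos mult_neg_neg linorder_neqE_linordered_idom)
    ultimately show ?thesis using cont_pos that by blast
  qed
  obtain \<epsilon>4 where e4: "\<epsilon>4 > 0" "\<forall>\<tau>. \<bar>\<tau> - 1\<bar> < \<epsilon>4 \<longrightarrow> poly (GR \<tau>) \<rho>2 * g2 > 0"
  proof -
    have "isCont (\<lambda>\<tau>. poly (GR \<tau>) \<rho>2 * g2) 1" using cont_GR by (intro continuous_intros) auto
    moreover have "poly (GR 1) \<rho>2 * g2 > 0" using g2nz unfolding g2_def
      by (metis mult_pos_pos mult_neg_neg linorder_neqE_linordered_idom)
    ultimately show ?thesis using cont_pos that by blast
  qed
  obtain \<epsilon>5 where e5: "\<epsilon>5 > 0" "\<forall>\<tau>. \<bar>\<tau> - 1\<bar> < \<epsilon>5 \<longrightarrow> B * \<gamma> \<tau> > 0"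
  proof -
    have "isCont (\<lambda>\<tau>. B * \<gamma> \<tau>) 1" using cont_\<gamma> by (intro continuous_intros) auto
    moreover have "B * \<gamma> 1 > 0" using B0 unfolding \<gamma>1 B_def[symmetric]
      by (metis mult_pos_pos mult_neg_neg linorder_neqE_linordered_idom)
    ultimately show ?thesis using cont_pos that by blast
  qed
  define \<epsilon> where "\<epsilon> = min \<epsilon>1 (min \<epsilon>2 (min \<epsilon>3 (min \<epsilon>4 \<epsilon>5)))"
  have e0: "\<epsilon> > 0" unfolding \<epsilon>_def using e1 e2 e3 e4 e5 by simp
  have ele: "\<epsilon> \<le> \<epsilon>1" "\<epsilon> \<le> \<epsilon>2" "\<epsilon> \<le> \<epsilon>3" "\<epsilon> \<le> \<epsilon>4" "\<epsilon> \<le> \<epsilon>5" unfolding \<epsilon>_def by simp_all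
  define \<tau> where "\<tau> = 1 + \<epsilon> / 2"
  have t1: "\<tau> > 1" and td: "\<bar>\<tau> - 1\<bar> < \<epsilon>" unfolding \<tau>_def using e0 by auto
  have G0: "GC \<tau> \<noteq> 0" using GC_nz[OF t1] .
  have cr1: "cnt \<rho>1 (GC \<tau>) = m" using e1 td ele c1 by auto
  have cr2: "cnt \<rho>2 (GC \<tau>) = cnt \<rho>1 (GC \<tau>) + 1" using e2 td ele c2 cr1 by auto
  have X1: "poly (GR \<tau>) \<rho>1 * g1 > 0" using e3 td ele by auto
  have X2: "poly (GR \<tau>) \<rho>2 * g2 > 0" using e4 td ele by auto
  have Y: "B * poly (GR \<tau>) 1 > 0"
  proof -
    have "poly (GR \<tau>) 1 = \<alpha>p \<tau>" unfolding poly_GR poly_AP_fac by simp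
    also have "\<dots> = (\<tau> - 1) * \<gamma> \<tau>" by (rule \<alpha>p_fac)
    finally have e: "poly (GR \<tau>) 1 = (\<tau> - 1) * \<gamma> \<tau>" .
    have eq2: "B * poly (GR \<tau>) 1 = (\<tau> - 1) * (B * \<gamma> \<tau>)" unfolding e by (simp add: algebra_simps)
    have "B * \<gamma> \<tau> > 0" using e5 td ele by auto
    then have "(\<tau> - 1) * (B * \<gamma> \<tau>) > 0" using t1 by simp
    then show ?thesis by (simp only: eq2)
  qed
  have root: "\<exists>x. poly (GR \<tau>) x = 0 \<and> \<rho>1 < x \<and> x < \<rho>2 \<and> (x < 1 \<longleftrightarrow> a > 0)"
  proof (cases "a > 0")
    case True
    have eqB: "B * g1 = (lam * (B * B)) * ((\<rho>1 - 1) * poly PP \<rho>1)"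
      unfolding g1_def GR1_poly B_def[symmetric] by (simp add: algebra_simps)
    have "poly (PP::real poly) \<rho>1 > 0" using P1 True by (simp add: zero_less_mult_iff)
    then have n1: "(\<rho>1 - 1) * poly PP \<rho>1 < 0" using rr by (simp add: mult_neg_pos)
    have "B * B > 0" using B0 by (metis mult_pos_pos mult_neg_neg linorder_neqE_linordered_idom)
    then have "lam * (B * B) > 0" using lam0 by simp
    then have "B * g1 < 0" unfolding eqB using n1 by (rule mult_pos_neg)
    moreover have "(poly (GR \<tau>) \<rho>1 * g1) * (B * poly (GR \<tau>) 1) > 0" using X1 Y by (rule mult_pos_pos)
    moreover have "(poly (GR \<tau>) \<rho>1 * g1) * (B * poly (GR \<tau>) 1) = (poly (GR \<tau>) \<rho>1 * poly (GR \<tau>) 1) * (B * g1)"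
      by (simp add: algebra_simps)
    ultimately have "poly (GR \<tau>) \<rho>1 * poly (GR \<tau>) 1 < 0" using neg_from_prod by metis
    then obtain x where "x > \<rho>1" "x < 1" "poly (GR \<tau>) x = 0" using poly_IVT[OF rr(2)] by blast
    then show ?thesis using True rr by (intro exI[of _ x]) auto
  next
    case False
    then have an: "a < 0" using a0 by simp
    have eqB: "B * g2 = (lam * (B * B)) * ((\<rho>2 - 1) * poly PP \<rho>2)"
      unfolding g2_def GR1_poly B_def[symmetric] by (simp add: algebra_simps)
    have "poly (PP::real poly) \<rho>2 < 0" using P2 an by (simp add: zero_less_mult_iff)
    then have n1: "(\<rho>2 - 1) * poly PP \<rho>2 < 0" using rr by (simp add: mult_pos_neg)
    have "B * B > 0" using B0 by (metis mult_pos_pos mult_neg_neg linorder_neqE_linordered_idom)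
    then have "lam * (B * B) > 0" using lam0 by simp
    then have "B * g2 < 0" unfolding eqB using n1 by (rule mult_pos_neg)
    moreover have "(poly (GR \<tau>) \<rho>2 * g2) * (B * poly (GR \<tau>) 1) > 0" using X2 Y by (rule mult_pos_pos)
    moreover have "(poly (GR \<tau>) \<rho>2 * g2) * (B * poly (GR \<tau>) 1) = (poly (GR \<tau>) 1 * poly (GR \<tau>) \<rho>2) * (B * g2)"
      by (simp add: algebra_simps)
    ultimately have "poly (GR \<tau>) 1 * poly (GR \<tau>) \<rho>2 < 0" using neg_from_prod by metis
    then obtain x where "x > 1" "x < \<rho>2" "poly (GR \<tau>) x = 0" using poly_IVT[OF rr(3)] by blast
    then show ?thesis using False rr by (intro exI[of _ x]) auto
  qed
  then obtain x where x: "poly (GR \<tau>) x = 0" "\<rho>1 < x" "x < \<rho>2" "x < 1 \<longleftrightarrow> a > 0" by blast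
  have xc: "poly (GC \<tau>) (of_real x) = 0" using x(1) poly_GC_real by simp
  have cx: "cmod (complex_of_real x) = x" using x(2) rr by simp
  have "cnt 1 (GC \<tau>) = cnt \<rho>1 (GC \<tau>) + (if cmod (complex_of_real x) < 1 then 1 else 0)"
    by (rule ANN[OF G0 _ _ cr2 xc]) (use rr x cx in auto)
  then show ?thesis using t1 cr1 cx x(4) unfolding m_def by (intro exI[of _ \<tau>]) auto
qed

lemma count_real: "(a > 0 \<longrightarrow> cnt 1 (PP::complex poly) + 1 = r) \<and> (a < 0 \<longrightarrow> cnt 1 (PP::complex poly) = r)"
proof -
  obtain \<tau> where t: "\<tau> > 1" "cnt 1 (GC \<tau>) = cnt 1 (PP::complex poly) + (if a > 0 then 1 else 0)"
    using S5 by blast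
  obtain \<tau>' where t': "\<tau>' > 1" "cnt 1 (GC \<tau>') = r" using S3 by blast
  have "cnt 1 (GC \<tau>) = r" using S4[OF t(1) t'(1)] t'(2) by simp
  then show ?thesis using t(2) by auto
qed

end



context setting begin

lemma main:
  shows "(a > 0 \<longrightarrow>
            C_num A r p = {0} \<and>
            (\<forall>v. boundary_layer_profile A r p 0 v \<longleftrightarrow> v = (\<lambda>_. 0)))
       \<and> (a < 0 \<longrightarrow>
            C_num A r p = UNIV \<and>
            (\<forall>u. \<exists>!v. boundary_layer_profile A r p u v) \<and>
            (\<forall>u v. boundary_layer_profile A r p u v \<longrightarrow>
               (\<exists>K \<delta>. \<delta> > 0 \<and> (\<forall>j. \<bar>v j\<bar> \<le> K * exp (- \<delta> * real j)))) \<and>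
            (\<forall>u v w. boundary_layer_profile A r p u v \<longrightarrow> boundary_layer_profile A r p 1 w \<longrightarrow>
               (\<forall>j. v j = u * w j)))"
proof -
  define m where "m = cnt 1 (PP::complex poly)"
  obtain Q R where QR: "(PP::complex poly) = Q * R" "lead_coeff Q = 1" "degree Q = m" "R \<noteq> 0"
      "\<forall>z. poly Q z = 0 \<longrightarrow> cmod z < 1" "\<forall>z. poly R z = 0 \<longrightarrow> cmod z > 1"
    using split_poly[OF PP_nz] PP_circle unfolding m_def by blast
  have Q0: "Q \<noteq> 0" using QR(2) by auto
  have DEC: "\<forall>j. ap Q (\<lambda>j. complex_of_real (v j)) j = 0"
    if "\<forall>j. ap PP v j = 0" "v \<longlonglongrightarrow> 0" for v
  proof -
    define vc where "vc = (\<lambda>j. complex_of_real (v j))"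
    have "vc \<longlonglongrightarrow> 0" unfolding vc_def using that(2) tendsto_of_real by fastforce
    then have t: "ap Q vc \<longlonglongrightarrow> 0" by (rule ap_tendsto)
    have "ap R (ap Q vc) j = 0" for j
      using that(1) ap_PP_real[of v j] QR(1) ap_mult[of R Q vc j] unfolding vc_def
      by (simp add: mult.commute)
    then show ?thesis using R1_aux[OF QR(4) QR(6) _ t] unfolding vc_def by blast
  qed
  have zero_prof: "boundary_layer_profile A r p 0 (\<lambda>_. 0)"
    unfolding profile_iff by (simp add: ap_def)
  have Q1: "poly Q 1 \<noteq> 0" using QR(5) by force
  show ?thesis
  proof (intro conjI impI)
    assume "a > 0"
    then have mr: "m + 1 = r" using count_real m_def by simp
    have u0: "u = 0" and v0: "v = (\<lambda>_. 0)" if "boundary_layer_profile A r p u v" for u v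
    proof -
      have pr: "\<forall>j<r. v j = - u" "\<forall>j. ap PP v j = 0" "v \<longlonglongrightarrow> 0" using that profile_iff by auto
      have d: "\<forall>j. ap Q (\<lambda>j. complex_of_real (v j)) j = 0" using DEC pr by blast
      have "ap Q (\<lambda>j. complex_of_real (v j)) 0 = (\<Sum>i\<le>m. coeff Q i * complex_of_real (- u))"
        unfolding ap_def QR(3) using pr(1) mr by (intro sum.cong) auto
      also have "\<dots> = - complex_of_real u * poly Q 1" by (simp add: poly_altdef QR(3) sum_distrib_left algebra_simps)
      finally show "u = 0" using d Q1 by simp
      then have "\<forall>i<m. complex_of_real (v i) = 0" using pr(1) mr by auto
      then have "complex_of_real (v n) = 0" for n using R2[OF QR(2,3)] d by blast
      then show "v = (\<lambda>_. 0)" by auto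
    qed
    show "C_num A r p = {0}" unfolding C_num_def using u0 zero_prof by blast
    show "\<forall>v. boundary_layer_profile A r p 0 v \<longleftrightarrow> v = (\<lambda>_. 0)" using v0 zero_prof by blast
  next
    assume "a < 0"
    then have mr: "m = r" using count_real m_def by simp
    have ex: "\<exists>v. boundary_layer_profile A r p u v" for u
    proof -
      obtain w where w: "\<forall>j. ap Q w j = 0" "\<forall>i<m. w i = - complex_of_real u"
        using R3[OF QR(2,3), of "\<lambda>_. - complex_of_real u"] by blast
      have "expd w" by (rule R4[OF Q0 QR(5) w(1)])
      then obtain K \<nu> where K: "0 < \<nu>" "\<nu> < 1" "\<forall>j. cmod (w j) \<le> K * \<nu>^j" unfolding expd_def by blast
      have gt: "(\<lambda>j. K * \<nu>^j) \<longlonglongrightarrow> 0" using K by (intro tendsto_mult_right_zero LIMSEQ_power_zero) auto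
      have wt: "w \<longlonglongrightarrow> 0"
        by (rule Lim_null_comparison[OF _ gt]) (use K(3) in \<open>auto intro: always_eventually\<close>)
      have apw: "ap PP w j = 0" for j
        using QR(1) ap_mult[of R Q w j] w(1) by (simp add: mult.commute ap_def)
      define v where "v = (\<lambda>j. Re (w j))"
      have "boundary_layer_profile A r p u v"
        unfolding profile_iff
      proof (intro conjI allI impI)
        show "v j = - u" if "j < r" for j using w(2) that mr by (simp add: v_def)
        show "ap PP v j = 0" for j using ap_PP_Re[of w j] apw by (simp add: v_def)
        show "v \<longlonglongrightarrow> 0" unfolding v_def using tendsto_Re[OF wt] by simp
      qed
      then show ?thesis by blast
    qed
    have uniq: "v1 = v2" if "boundary_layer_profile A r p u v1" "boundary_layer_profile A r p u v2" for u v1 v2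
    proof -
      define d where "d = (\<lambda>j. v1 j - v2 j)"
      have p1: "\<forall>j<r. v1 j = - u" "\<forall>j. ap PP v1 j = 0" "v1 \<longlonglongrightarrow> 0" using that(1) profile_iff by auto
      have p2: "\<forall>j<r. v2 j = - u" "\<forall>j. ap PP v2 j = 0" "v2 \<longlonglongrightarrow> 0" using that(2) profile_iff by auto
      have "\<forall>j. ap PP d j = 0" unfolding d_def using p1 p2 by (simp add: ap_diff)
      moreover have "d \<longlonglongrightarrow> 0" unfolding d_def using tendsto_diff[OF p1(3) p2(3)] by simp
      ultimately have dd: "\<forall>j. ap Q (\<lambda>j. complex_of_real (d j)) j = 0" using DEC by blast
      have "\<forall>i<m. complex_of_real (d i) = 0" using p1 p2 mr by (simp add: d_def)
      then have "complex_of_real (d n) = 0" for n using R2[OF QR(2,3)] dd by blast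
      then show ?thesis unfolding d_def by (auto simp: fun_eq_iff)
    qed
    show "C_num A r p = UNIV" unfolding C_num_def using ex by blast
    show "\<forall>u. \<exists>!v. boundary_layer_profile A r p u v" using ex uniq by blast
    show "\<forall>u v. boundary_layer_profile A r p u v \<longrightarrow>
               (\<exists>K \<delta>. \<delta> > 0 \<and> (\<forall>j. \<bar>v j\<bar> \<le> K * exp (- \<delta> * real j)))"
    proof (intro allI impI)
      fix u v assume "boundary_layer_profile A r p u v"
      then have pr: "\<forall>j<r. v j = - u" "\<forall>j. ap PP v j = 0" "v \<longlonglongrightarrow> 0" using profile_iff by auto
      then have "expd (\<lambda>j. complex_of_real (v j))" using R4[OF Q0 QR(5)] DEC by blast
      then obtain K \<nu> where K: "0 < \<nu>" "\<nu> < 1" "\<forall>j. cmod (complex_of_real (v j)) \<le> K * \<nu>^j"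
        unfolding expd_def by blast
      have "\<nu> ^ j = exp (- (- ln \<nu>) * real j)" for j
      proof -
        have "exp (real j * ln \<nu>) = exp (ln \<nu>) ^ j" by (rule exp_of_nat_mult)
        then show ?thesis using K(1) by (simp add: mult.commute)
      qed
      then have "\<forall>j. \<bar>v j\<bar> \<le> K * exp (- (- ln \<nu>) * real j)" using K(3) by simp
      moreover have "- ln \<nu> > 0" using K by simp
      ultimately show "\<exists>K \<delta>. \<delta> > 0 \<and> (\<forall>j. \<bar>v j\<bar> \<le> K * exp (- \<delta> * real j))" by blast
    qed
    show "\<forall>u v w. boundary_layer_profile A r p u v \<longrightarrow> boundary_layer_profile A r p 1 w \<longrightarrow>
               (\<forall>j. v j = u * w j)"
    proof (intro allI impI)
      fix u v w j assume hv: "boundary_layer_profile A r p u v" and hw: "boundary_layer_profile A r p 1 w"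
      have pw: "\<forall>j<r. w j = - 1" "\<forall>j. ap PP w j = 0" "w \<longlonglongrightarrow> 0" using hw profile_iff by auto
      have c1: "\<forall>j<r. u * w j = - u" using pw(1) by simp
      have c2: "\<forall>j. ap PP (\<lambda>j. u * w j) j = 0" using pw(2) by (simp add: ap_cmult)
      have c3: "(\<lambda>j. u * w j) \<longlonglongrightarrow> 0" using tendsto_mult_right_zero[OF pw(3)] by simp
      have "boundary_layer_profile A r p u (\<lambda>j. u * w j)" using profile_iff c1 c2 c3 by blast
      then have "v = (\<lambda>j. u * w j)" using uniq hv by blast
      then show "v j = u * w j" by simp
    qed
  qed
qed

end

theorem proposition2p7:
  fixes a lam :: real and A :: "int \<Rightarrow> real" and p r k :: nat
    and \<alpha> \<beta> :: "nat \<Rightarrow> real"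
  assumes "a \<noteq> 0"
    and "A (- int r) \<noteq> 0" and "A (int p) \<noteq> 0"
    and "k \<ge> 1" and "\<alpha> k = 1" and "\<bar>\<alpha> 0\<bar> + \<bar>\<beta> 0\<bar> > 0"
    and "lam > 0"
    and A1: "(\<Sum>l\<in>{- int r..int p}. A l) = 0" "(\<Sum>l\<in>{- int r..int p}. of_int l * A l) = a"
    and A2: "(\<Sum>\<sigma>\<le>k. \<alpha> \<sigma>) = 0" "(\<Sum>\<sigma>\<le>k. of_nat \<sigma> * \<alpha> \<sigma>) = (\<Sum>\<sigma><k. \<beta> \<sigma>)"
    and A3: "stable_scheme A r p k \<alpha> \<beta> lam"
    and A4: "\<forall>\<theta>\<in>{-pi..pi} - {0}. symbol A r p (cis \<theta>) \<noteq> 0"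
  shows "(a > 0 \<longrightarrow>
            C_num A r p = {0} \<and>
            (\<forall>v. boundary_layer_profile A r p 0 v \<longleftrightarrow> v = (\<lambda>_. 0)))
       \<and> (a < 0 \<longrightarrow>
            C_num A r p = UNIV \<and>
            (\<forall>u. \<exists>!v. boundary_layer_profile A r p u v) \<and>
            (\<forall>u v. boundary_layer_profile A r p u v \<longrightarrow>
               (\<exists>K \<delta>. \<delta> > 0 \<and> (\<forall>j. \<bar>v j\<bar> \<le> K * exp (- \<delta> * real j)))) \<and>
            (\<forall>u v w. boundary_layer_profile A r p u v \<longrightarrow> boundary_layer_profile A r p 1 w \<longrightarrow>
               (\<forall>j. v j = u * w j)))"
proof -
  interpret S: setting a lam A p r k \<alpha> \<beta>
    using assms by unfold_locales auto
  show ?thesis by (rule S.main)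
qed

end
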